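(* Let $\mathbf{k}$ be a field, $U$ a $3$-dimensional $\mathbf{k}$-vector space with basis $x,y,z$, $U_0$ the span of $y,z$, $R=\operatorname{Sym}_\bullet U$, and $n$ a positive integer. Let $\Phi_{2n-1}\in D_{2n-1}U^*$ and assume that the $\mathbf{k}$-linear map $p:\operatorname{Sym}_{n-1}U\to D_{n-1}U^*$, $p(\mu_{n-1})=\mu_{n-1}(x(\Phi_{2n-1}))$, is an isomorphism. Let $I=\{\mu\in R\mid \mu(x(\Phi_{2n-1}))=0\}$. Let $B_0=B_3=R$, $B_1=(R\otimes D_{n-1}U_0^* )\oplus(R\otimes\operatorname{Sym}_nU_0)$, $B_2=(R\otimes\operatorname{Sym}_{n-1}U_0)\oplus(R\otimes D_nU_0^* )$ (tensor products over $\mathbf{k}$), and define $R$-linear maps, for $\mu_{0,i}\in\operatorname{Sym}_iU_0$ and $\nu_{0,i}\in D_iU_0^*$, by $$b_1(\nu_{0,n-1})=xp^{-1}(\nu_{0,n-1}),\qquad b_1(\mu_{0,n})=\mu_{0,n}-xp^{-1}(\mu_{0,n}(\Phi_{2n-1})),$$ $b_2(\mu_{0,n-1},0)$ has $R\otimes D_{n-1}U_0^*$-component $$x\sum_{m_1}\Big(\big(p^{-1}[(z\mu_{0,n-1})(\Phi_{2n-1})]\big)[(ym_1)(\Phi_{2n-1})]-\big(p^{-1}[(y\mu_{0,n-1})(\Phi_{2n-1})]\big)[(zm_1)(\Phi_{2n-1})]\Big)\otimes m_1^*$$ and $R\otimes\operatorname{Sym}_nU_0$-component $$x\sum_{m_2}\Big(\big(p^{-1}[(z\mu_{0,n-1})(\Phi_{2n-1})]\big)(y(m_2^*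 ))-\big(p^{-1}[(y\mu_{0,n-1})(\Phi_{2n-1})]\big)(z(m_2^* ))\Big)\otimes m_2+y\otimes z\mu_{0,n-1}-z\otimes y\mu_{0,n-1};$$ $b_2(0,\nu_{0,n})$ has $R\otimes D_{n-1}U_0^*$-component $$x\sum_{m_1}\Big(-\big(p^{-1}[(zm_1)(\Phi_{2n-1})]\big)(y(\nu_{0,n}))+\big(p^{-1}[(ym_1)(\Phi_{2n-1})]\big)(z(\nu_{0,n}))\Big)\otimes m_1^*-y\otimes z(\nu_{0,n})+z\otimes y(\nu_{0,n})$$ and $R\otimes\operatorname{Sym}_nU_0$-component $$x\sum_{m_2}\Big([p^{-1}(z(\nu_{0,n}))][y(m_2^* )]-[p^{-1}(y(\nu_{0,n}))][z(m_2^* )]\Big)\otimes m_2;$$ and $$b_3(1)=\Big(\sum_{m_1}b_1(m_1^* )\otimes m_1,\ \sum_{m_2}b_1(m_2)\otimes m_2^*\Big),$$ where $m_1$ ranges over the monomials of degree $n-1$ in $y,z$ and $m_2$ over the monomials of degree $n$ in $y,z$. Then $0\to B_3\xrightarrow{b_3}B_2\xrightarrow{b_2}B_1\xrightarrow{b_1}B_0$ is a minimal homogeneous resolution of $R/I$ by free $R$-modules, with graded form $0\to R(-2n-1)\to R(-n-1)^{2n+1}\to R(-n)^{2n+1}\to R$.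
   Context: $D_iV^*=\operatorname{Hom}_{\mathbf{k}}(\operatorname{Sym}_iV,\mathbf{k})$. $\operatorname{Sym}_\bullet U$ acts on $D_\bullet U^*=\bigoplus_iD_iU^*$: for $u\in\operatorname{Sym}_iU$, $w\in D_jU^*$, $u(w)\in D_{j-i}U^*$ is $v\mapsto w(vu)$ (zero if $i>j$); when $i=j$, $u(w)=w(u)\in\mathbf{k}$. For a monomial $m$ of degree $i$, $m^*$ denotes the dual basis element of $D_iU^*$ (with respect to the monomial basis). $D_iU_0^*$ is identified with the subspace of $D_iU^*$ spanned by the $m^*$ with $m$ a monomial in $y,z$ only; thus $p^{-1}$ may be applied to elements of $D_{n-1}U_0^*$. An expression $\mu(w)$ with $\mu\in\operatorname{Sym}_{n-1}U$ and $w\in D_{n-1}U^*$ is an element of $\mathbf{k}$. In $R\otimes\operatorname{Sym}_nU_0$ and $R\otimes D_{n-1}U_0^*$, $y\otimes(\cdot)$ and $z\otimes(\cdot)$ denote the linear forms $y,z\in R$ tensored with the indicated element. In the graded form, $B_1$ sits in degree $n$ and $B_2$ in degree $n+1$. *)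

theory Defs
  imports Main "HOL-Library.Poly_Mapping"
begin

text \<open>The three variables x, y, z of U; monomials are exponent vectors.
  R = Sym U = k[x,y,z] is the ring of finitely supported functions from
  monomials to k (with convolution product).\<close>

datatype var3 = VX | VY | VZ

type_synonym mono = "var3 \<Rightarrow>\<^sub>0 nat"
type_synonym 'k mpoly3 = "mono \<Rightarrow>\<^sub>0 'k"

text \<open>Elements of the divided power module D U^* (dual of Sym U, w.r.t. the
  monomial basis) are represented by their values on monomials.\<close>
type_synonym 'k dp = "mono \<Rightarrow> 'k"

definition mdeg :: "mono \<Rightarrow> nat" where
  "mdeg m = Poly_Mapping.lookup m VX + Poly_Mapping.lookup m VY + Poly_Mapping.lookup m VZ"

definition mon :: "mono \<Rightarrow> 'k::comm_ring_1 mpoly3" where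
  "mon m = Poly_Mapping.single m 1"

definition cst :: "'k::comm_ring_1 \<Rightarrow> 'k mpoly3" where
  "cst c = Poly_Mapping.single 0 c"

definition Xp :: "'k::comm_ring_1 mpoly3" where "Xp = mon (Poly_Mapping.single VX 1)"
definition Yp :: "'k::comm_ring_1 mpoly3" where "Yp = mon (Poly_Mapping.single VY 1)"
definition Zp :: "'k::comm_ring_1 mpoly3" where "Zp = mon (Poly_Mapping.single VZ 1)"

definition homog :: "nat \<Rightarrow> 'k::comm_ring_1 mpoly3 \<Rightarrow> bool" where
  "homog d f \<longleftrightarrow> (\<forall>m\<in>Poly_Mapping.keys f. mdeg m = d)"

definition Sym :: "nat \<Rightarrow> 'k::comm_ring_1 mpoly3 set" where
  "Sym d = {f. homog d f}"

text \<open>D_j U^*: functionals on Sym_j U, i.e. functions vanishing off degree j.\<close>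
definition Dsp :: "nat \<Rightarrow> 'k::comm_ring_1 dp set" where
  "Dsp j = {w. \<forall>m. mdeg m \<noteq> j \<longrightarrow> w m = 0}"

text \<open>Contraction action of R on D U^*: for a monomial u, u(w) is v \<mapsto> w(v u),
  extended linearly.  For u of degree j and w in D_j U^*, (act u w) 0 = w(u).\<close>
definition act :: "'k::comm_ring_1 mpoly3 \<Rightarrow> 'k dp \<Rightarrow> 'k dp" where
  "act \<mu> w = (\<lambda>v. \<Sum>u\<in>Poly_Mapping.keys \<mu>. Poly_Mapping.lookup \<mu> u * w (u + v))"

definition pair :: "'k::comm_ring_1 mpoly3 \<Rightarrow> 'k dp \<Rightarrow> 'k" where
  "pair \<mu> w = act \<mu> w 0"

definition dual :: "mono \<Rightarrow> 'k::comm_ring_1 dp" where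
  "dual m = (\<lambda>m'. if m' = m then 1 else 0)"

definition M0 :: "nat \<Rightarrow> mono set" where
  "M0 d = {m. Poly_Mapping.lookup m VX = 0 \<and> mdeg m = d}"

definition pmap :: "'k::comm_ring_1 dp \<Rightarrow> 'k mpoly3 \<Rightarrow> 'k dp" where
  "pmap \<Phi> \<mu> = act \<mu> (act Xp \<Phi>)"

definition pinv :: "nat \<Rightarrow> 'k::comm_ring_1 dp \<Rightarrow> 'k dp \<Rightarrow> 'k mpoly3" where
  "pinv n \<Phi> = inv_into (Sym (n - 1)) (pmap \<Phi>)"

definition Iid :: "'k::comm_ring_1 dp \<Rightarrow> 'k mpoly3 set" where
  "Iid \<Phi> = {\<mu>. act \<mu> (act Xp \<Phi>) = (\<lambda>_. 0)}"

text \<open>Common index set of the free bases of B_1 and B_2 (both of type mono + mono).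
  For B_1 = (R \<otimes> D_{n-1}U_0^*) \<oplus> (R \<otimes> Sym_n U_0): Inl m1 stands for 1 \<otimes> m1^*,
  Inr m2 for 1 \<otimes> m2.  For B_2 = (R \<otimes> Sym_{n-1}U_0) \<oplus> (R \<otimes> D_n U_0^*):
  Inl m1 stands for 1 \<otimes> m1, Inr m2 for 1 \<otimes> m2^*.\<close>
type_synonym bidx = "mono + mono"

definition Bidx :: "nat \<Rightarrow> bidx set" where
  "Bidx n = Inl ` M0 (n - 1) \<union> Inr ` M0 n"

fun b1 :: "nat \<Rightarrow> 'k::comm_ring_1 dp \<Rightarrow> bidx \<Rightarrow> 'k mpoly3" where
  "b1 n \<Phi> (Inl m1) = Xp * pinv n \<Phi> (dual m1)"
| "b1 n \<Phi> (Inr m2) = mon m2 - Xp * pinv n \<Phi> (act (mon m2) \<Phi>)"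

text \<open>b_2 : B_2 \<rightarrow> B_1; b2 n \<Phi> i j is the coefficient at basis element i of B_1
  of the image of basis element j of B_2.\<close>
fun b2 :: "nat \<Rightarrow> 'k::comm_ring_1 dp \<Rightarrow> bidx \<Rightarrow> bidx \<Rightarrow> 'k mpoly3" where
  "b2 n \<Phi> (Inl m1) (Inl m) =
     Xp * cst (pair (pinv n \<Phi> (act (Zp * mon m) \<Phi>)) (act (Yp * mon m1) \<Phi>)
             - pair (pinv n \<Phi> (act (Yp * mon m) \<Phi>)) (act (Zp * mon m1) \<Phi>))"
| "b2 n \<Phi> (Inr m2) (Inl m) =
     Xp * cst (pair (pinv n \<Phi> (act (Zp * mon m) \<Phi>)) (act Yp (dual m2))
             - pair (pinv n \<Phi> (act (Yp * mon m) \<Phi>)) (act Zp (dual m2)))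
     + Yp * cst (Poly_Mapping.lookup (Zp * mon m) m2) - Zp * cst (Poly_Mapping.lookup (Yp * mon m) m2)"
| "b2 n \<Phi> (Inl m1) (Inr m) =
     Xp * cst (- pair (pinv n \<Phi> (act (Zp * mon m1) \<Phi>)) (act Yp (dual m))
             + pair (pinv n \<Phi> (act (Yp * mon m1) \<Phi>)) (act Zp (dual m)))
     - Yp * cst (act Zp (dual m) m1) + Zp * cst (act Yp (dual m) m1)"
| "b2 n \<Phi> (Inr m2) (Inr m) =
     Xp * cst (pair (pinv n \<Phi> (act Zp (dual m))) (act Yp (dual m2))
             - pair (pinv n \<Phi> (act Yp (dual m))) (act Zp (dual m2)))"

text \<open>b_3 : B_3 = R \<rightarrow> B_2; b3 n \<Phi> i is the coefficient of b_3(1) at basis element i: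
  b_3(1) = (\<Sum>m1. b_1(m1^*) \<otimes> m1, \<Sum>m2. b_1(m2) \<otimes> m2^*).\<close>
fun b3 :: "nat \<Rightarrow> 'k::comm_ring_1 dp \<Rightarrow> bidx \<Rightarrow> 'k mpoly3" where
  "b3 n \<Phi> (Inl m1) = b1 n \<Phi> (Inl m1)"
| "b3 n \<Phi> (Inr m2) = b1 n \<Phi> (Inr m2)"

text \<open>Free modules B_1, B_2 as coefficient functions supported on the index set,
  and the induced R-linear maps.\<close>
definition Fmod :: "nat \<Rightarrow> (bidx \<Rightarrow> 'k::comm_ring_1 mpoly3) set" where
  "Fmod n = {f. \<forall>i. i \<notin> Bidx n \<longrightarrow> f i = 0}"

definition beta1 :: "nat \<Rightarrow> 'k::comm_ring_1 dp \<Rightarrow> (bidx \<Rightarrow> 'k mpoly3) \<Rightarrow> 'k mpoly3" where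
  "beta1 n \<Phi> f = (\<Sum>j\<in>Bidx n. b1 n \<Phi> j * f j)"

definition beta2 :: "nat \<Rightarrow> 'k::comm_ring_1 dp \<Rightarrow> (bidx \<Rightarrow> 'k mpoly3) \<Rightarrow> (bidx \<Rightarrow> 'k mpoly3)" where
  "beta2 n \<Phi> f = (\<lambda>i. if i \<in> Bidx n then (\<Sum>j\<in>Bidx n. b2 n \<Phi> i j * f j) else 0)"

definition beta3 :: "nat \<Rightarrow> 'k::comm_ring_1 dp \<Rightarrow> 'k mpoly3 \<Rightarrow> (bidx \<Rightarrow> 'k mpoly3)" where
  "beta3 n \<Phi> r = (\<lambda>i. if i \<in> Bidx n then b3 n \<Phi> i * r else 0)"

end

theory Submission
  imports Defs
begin

fun vrank :: "var3 \<Rightarrow> nat" where "vrank VX = 0" | "vrank VY = 1" | "vrank VZ = 2"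

lemma vrank_inj: "vrank a = vrank b \<Longrightarrow> a = b"
  by (cases a; cases b; simp)

instantiation var3 :: linorder begin
definition less_eq_var3 :: "var3 \<Rightarrow> var3 \<Rightarrow> bool" where "less_eq_var3 a b \<longleftrightarrow> vrank a \<le> vrank b"
definition less_var3 :: "var3 \<Rightarrow> var3 \<Rightarrow> bool" where "less_var3 a b \<longleftrightarrow> vrank a < vrank b"
instance by standard (auto simp: less_eq_var3_def less_var3_def intro: vrank_inj)
end

abbreviation lkp where "lkp \<equiv> Poly_Mapping.lookup"
abbreviation kys where "kys \<equiv> Poly_Mapping.keys"

lemma var3_all: "(\<forall>v. P v) \<longleftrightarrow> P VX \<and> P VY \<and> P VZ"
  by (metis var3.exhaust)

lemma mono_eqI: "lkp a VX = lkp b VX \<Longrightarrow> lkp a VY = lkp b VY \<Longrightarrow> lkp a VZ = lkp b VZ \<Longrightarrow> a = (b::mono)"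
  by (rule poly_mapping_eqI) (metis var3.exhaust)

lemma mdeg_add[simp]: "mdeg (a + b) = mdeg a + mdeg b"
  by (simp add: mdeg_def lookup_add)

lemma mdeg_zero[simp]: "mdeg 0 = 0"
  by (simp add: mdeg_def)

lemma mdeg_single[simp]: "mdeg (Poly_Mapping.single v k) = k"
  by (cases v) (simp_all add: mdeg_def lookup_single)

lemma mdeg_0_iff: "mdeg m = 0 \<longleftrightarrow> m = 0"
  by (auto simp: mdeg_def intro!: mono_eqI)

lemma mono_dvd_iff: "(\<exists>q. k = m + q) \<longleftrightarrow> (\<forall>v. lkp m v \<le> lkp (k::mono) v)"
proof
  assume "\<forall>v. lkp m v \<le> lkp k v"
  then have "k = m + (k - m)"
    by (intro poly_mapping_eqI) (simp add: lookup_add lookup_minus)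
  then show "\<exists>q. k = m + q" by blast
qed (auto simp: lookup_add)

lemma lookup_mon_mult: "lkp (mon m * F) k = (\<Sum>q. lkp F q when k = m + q)"
  unfolding mon_def lookup_mult by (simp add: lookup_single when_mult)

lemma lookup_mon_mult_add[simp]: "lkp (mon m * F) (m + w) = lkp F w"
  unfolding lookup_mon_mult by simp

lemma lookup_mon_mult_nd: "(\<And>q. k \<noteq> m + q) \<Longrightarrow> lkp (mon m * F) k = 0"
  unfolding lookup_mon_mult by (simp add: when_def)

lemma lookup_cst_mult[simp]: "lkp (cst c * F) k = c * lkp F k"
  unfolding cst_def lookup_mult by (simp add: lookup_single when_mult Sum_any_right_distrib mult_when)

lemma keys_mon_mult: "kys (mon m * F) = (\<lambda>q. m + q) ` kys F"
proof (rule set_eqI)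
  fix k
  show "k \<in> kys (mon m * F) \<longleftrightarrow> k \<in> (\<lambda>q. m + q) ` kys F"
  proof (cases "\<exists>q. k = m + q")
    case True
    then obtain q where "k = m + q" by blast
    then show ?thesis by (auto simp: in_keys_iff)
  next
    case False
    then show ?thesis by (auto simp: in_keys_iff lookup_mon_mult_nd)
  qed
qed

lemma mon_add: "mon (a + b) = (mon a * mon b :: 'k::comm_ring_1 mpoly3)"
  by (simp add: mon_def mult_single)

lemma mon_zero[simp]: "mon 0 = (1 :: 'k::comm_ring_1 mpoly3)"
  by (simp add: mon_def)

lemma cst_mon: "cst c * mon m = (Poly_Mapping.single m c :: 'k::comm_ring_1 mpoly3)"
  by (simp add: cst_def mon_def mult_single)

lemma cst_add: "cst (a + b) = (cst a + cst b :: 'k::comm_ring_1 mpoly3)"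
  by (simp add: cst_def single_add)

lemma cst_diff: "cst (a - b) = (cst a - cst b :: 'k::comm_ring_1 mpoly3)"
  by (simp add: cst_def single_diff)

lemma cst_uminus: "cst (- a) = (- cst a :: 'k::comm_ring_1 mpoly3)"
  by (simp add: cst_def single_uminus)

lemma cst_mult: "cst (a * b) = (cst a * cst b :: 'k::comm_ring_1 mpoly3)"
  by (simp add: cst_def mult_single)

lemma cst_zero[simp]: "cst 0 = (0 :: 'k::comm_ring_1 mpoly3)"
  by (simp add: cst_def)

lemma cst_one[simp]: "cst 1 = (1 :: 'k::comm_ring_1 mpoly3)"
  by (simp add: cst_def)

lemma lookup_mon: "lkp (mon m :: 'k::comm_ring_1 mpoly3) k = (if k = m then 1 else 0)"
  by (simp add: mon_def lookup_single)

lemma keys_mon[simp]: "kys (mon m :: 'k::comm_ring_1 mpoly3) = {m}"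
  by (simp add: mon_def)

lemma poly_expand: "F = (\<Sum>m\<in>kys F. cst (lkp F m) * mon m :: 'k::comm_ring_1 mpoly3)"
proof (rule poly_mapping_eqI)
  fix k
  have "lkp (\<Sum>m\<in>kys F. cst (lkp F m) * mon m) k = (\<Sum>m\<in>kys F. lkp (cst (lkp F m) * mon m) k)"
    by (simp add: lookup_sum)
  also have "\<dots> = (\<Sum>m\<in>kys F. if k = m then lkp F m else 0)"
    by (intro sum.cong) (auto simp: lookup_mon)
  also have "\<dots> = lkp F k"
    by (simp add: sum.delta in_keys_iff)
  finally show "lkp F k = lkp (\<Sum>m\<in>kys F. cst (lkp F m) * mon m) k" by simp
qed

subsection \<open>The contraction action\<close>

lemma act_superset:
  assumes "finite A" "kys \<mu> \<subseteq> A"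
  shows "act \<mu> w v = (\<Sum>u\<in>A. lkp \<mu> u * w (u + v))"
  unfolding act_def using assms
  by (intro sum.mono_neutral_left) (auto simp: in_keys_iff)

lemma act_add: "act (\<mu> + \<nu>) w = (\<lambda>v. act \<mu> w v + act \<nu> w v)"
proof
  fix v
  have f: "finite (kys \<mu> \<union> kys \<nu>)" by simp
  have "kys (\<mu> + \<nu>) \<subseteq> kys \<mu> \<union> kys \<nu>" by (rule keys_add)
  then have "act (\<mu> + \<nu>) w v = (\<Sum>u\<in>kys \<mu> \<union> kys \<nu>. lkp (\<mu> + \<nu>) u * w (u + v))"
    using act_superset[OF f] by blast
  also have "\<dots> = (\<Sum>u\<in>kys \<mu> \<union> kys \<nu>. lkp \<mu> u * w (u + v)) + (\<Sum>u\<in>kys \<mu> \<union> kys \<nu>. lkp \<nu> u * w (u + v))"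
    by (simp add: lookup_add distrib_right sum.distrib)
  also have "\<dots> = act \<mu> w v + act \<nu> w v"
    using act_superset[OF f, of \<mu>] act_superset[OF f, of \<nu>] by simp
  finally show "act (\<mu> + \<nu>) w v = act \<mu> w v + act \<nu> w v" .
qed

lemma act_uminus: "act (- \<mu>) w = (\<lambda>v. - act \<mu> w v)"
  unfolding act_def by (auto simp: sum_negf)

lemma act_diff: "act (\<mu> - \<nu>) w = (\<lambda>v. act \<mu> w v - act \<nu> w v)"
  using act_add[of \<mu> "- \<nu>" w] by (simp add: act_uminus)

lemma act_zero[simp]: "act 0 w = (\<lambda>_. 0)"
  unfolding act_def by simp

lemma act_cst_mult: "act (cst c * \<mu>) w = (\<lambda>v. c * act \<mu> w v)"
proof
  fix v
  have "kys (cst c * \<mu>) \<subseteq> kys \<mu>" by (auto simp: in_keys_iff)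
  then show "act (cst c * \<mu>) w v = c * act \<mu> w v"
    using act_superset[of "kys \<mu>" "cst c * \<mu>"]
    by (simp add: act_def sum_distrib_left mult.assoc)
qed

lemma act_sum: "finite I \<Longrightarrow> act (\<Sum>i\<in>I. \<mu> i) w = (\<lambda>v. \<Sum>i\<in>I. act (\<mu> i) w v)"
  by (induction I rule: finite_induct) (simp_all add: act_add)

lemma act_mon: "act (mon m) w = (\<lambda>v. w (m + v))"
  unfolding act_def by (simp add: lookup_mon)

lemma act_mon_mult: "act (mon m * \<mu>) w = (\<lambda>v. act \<mu> w (m + v))"
proof
  fix v
  have "act (mon m * \<mu>) w v = (\<Sum>u\<in>(\<lambda>q. m + q) ` kys \<mu>. lkp (mon m * \<mu>) u * w (u + v))"
    unfolding act_def keys_mon_mult ..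
  also have "\<dots> = (\<Sum>q\<in>kys \<mu>. lkp \<mu> q * w (m + q + v))"
    by (subst sum.reindex) (auto simp: inj_on_def)
  also have "\<dots> = act \<mu> w (m + v)"
    unfolding act_def by (simp add: ac_simps)
  finally show "act (mon m * \<mu>) w v = act \<mu> w (m + v)" .
qed

lemma act_mult: "act (\<mu> * \<nu>) w = act \<mu> (act \<nu> w)"
proof
  fix v
  have "\<mu> * \<nu> = (\<Sum>m\<in>kys \<mu>. cst (lkp \<mu> m) * (mon m * \<nu>))"
    by (subst poly_expand[of \<mu>]) (simp add: sum_distrib_right mult.assoc)
  then have "act (\<mu> * \<nu>) w v = (\<Sum>m\<in>kys \<mu>. lkp \<mu> m * act \<nu> w (m + v))"
    by (simp add: act_sum act_cst_mult act_mon_mult)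
  also have "\<dots> = act \<mu> (act \<nu> w) v" by (simp add: act_def)
  finally show "act (\<mu> * \<nu>) w v = act \<mu> (act \<nu> w) v" .
qed

lemma act_one[simp]: "act 1 w = w"
  using act_mon[of 0 w] by simp

lemma act_comm: "act \<mu> (act \<nu> w) = act \<nu> (act \<mu> w)"
  by (metis act_mult mult.commute)

lemma act_wadd: "act \<mu> (\<lambda>v. w1 v + w2 v) = (\<lambda>v. act \<mu> w1 v + act \<mu> w2 v)"
  unfolding act_def by (auto simp: distrib_left sum.distrib)

lemma act_wdiff: "act \<mu> (\<lambda>v. w1 v - w2 v) = (\<lambda>v. act \<mu> w1 v - act \<mu> w2 v)"
  unfolding act_def by (auto simp: right_diff_distrib sum_subtractf)

lemma act_wscale: "act \<mu> (\<lambda>v. c * w v) = (\<lambda>v. c * act \<mu> w v)"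
  unfolding act_def by (auto simp: sum_distrib_left ac_simps)

lemma act_wzero[simp]: "act \<mu> (\<lambda>_. 0) = (\<lambda>_. 0)"
  unfolding act_def by simp

lemma act_wsum: "finite I \<Longrightarrow> act \<mu> (\<lambda>v. \<Sum>i\<in>I. w i v) = (\<lambda>v. \<Sum>i\<in>I. act \<mu> (w i) v)"
  by (induction I rule: finite_induct) (simp_all add: act_wadd)

lemma act_eval: "act \<mu> w v = pair (mon v * \<mu>) w"
  by (simp add: pair_def act_mon_mult)

lemma pair_dual: "pair \<mu> (dual m) = lkp \<mu> m"
proof -
  have "pair \<mu> (dual m) = (\<Sum>u\<in>kys \<mu>. if u = m then lkp \<mu> u else 0)"
    unfolding pair_def act_def dual_def by (intro sum.cong) auto
  also have "\<dots> = lkp \<mu> m" by (simp add: sum.delta' in_keys_iff)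
  finally show ?thesis .
qed

lemma act_dual_mon: "act (mon a) (dual m) v = (if m = a + v then 1 else 0)"
  by (simp add: act_mon dual_def)

subsection \<open>Homogeneity\<close>

lemma homog_zero[simp]: "homog d 0"
  by (simp add: homog_def)

lemma homog_add: "homog d F \<Longrightarrow> homog d G \<Longrightarrow> homog d (F + G)"
  unfolding homog_def
proof
  fix m assume "\<forall>m\<in>kys F. mdeg m = d" "\<forall>m\<in>kys G. mdeg m = d" "m \<in> kys (F + G)"
  moreover have "kys (F + G) \<subseteq> kys F \<union> kys G" by (rule keys_add)
  ultimately show "mdeg m = d" by auto
qed

lemma homog_uminus: "homog d F \<Longrightarrow> homog d (- F)"
  unfolding homog_def by (simp add: in_keys_iff)

lemma homog_diff: "homog d F \<Longrightarrow> homog d G \<Longrightarrow> homog d (F - G)"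
proof -
  assume "homog d F" "homog d G"
  then have "homog d (F + - G)" by (intro homog_add homog_uminus)
  then show ?thesis by simp
qed

lemma homog_mult: "homog a F \<Longrightarrow> homog b G \<Longrightarrow> homog (a + b) (F * G)"
  unfolding homog_def
proof
  fix m assume hF: "\<forall>m\<in>kys F. mdeg m = a" and hG: "\<forall>m\<in>kys G. mdeg m = b" and m: "m \<in> kys (F * G)"
  then obtain p q where "m = p + q" "p \<in> kys F" "q \<in> kys G" using keys_mult[of F G] by blast
  then show "mdeg m = a + b" using hF hG by simp
qed

lemma homog_mon: "homog (mdeg m) (mon m)"
  by (simp add: homog_def)

lemma homog_cst: "homog 0 (cst c)"
  by (simp add: homog_def cst_def)

lemma homog_cst_mult: "homog d F \<Longrightarrow> homog d (cst c * F)"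
  using homog_mult[OF homog_cst, of d F c] by simp

lemma homog_sum: "finite I \<Longrightarrow> (\<And>i. i \<in> I \<Longrightarrow> homog d (F i)) \<Longrightarrow> homog d (\<Sum>i\<in>I. F i)"
  by (induction I rule: finite_induct) (simp_all add: homog_add)

lemma homog_lookup: "homog d F \<Longrightarrow> mdeg m \<noteq> d \<Longrightarrow> lkp F m = 0"
  unfolding homog_def by (auto simp: in_keys_iff)

lemma dual_Dsp: "dual m \<in> Dsp (mdeg m)"
  by (simp add: Dsp_def dual_def)

lemma act_Dsp:
  assumes "homog a \<mu>" "w \<in> Dsp b"
  shows "act \<mu> w \<in> Dsp (b - a)" and "a > b \<Longrightarrow> act \<mu> w = (\<lambda>_. 0)"
proof -
  have z: "act \<mu> w v = 0" if "a + mdeg v \<noteq> b" for v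
    unfolding act_def
  proof (intro sum.neutral ballI)
    fix u assume "u \<in> kys \<mu>"
    then have "mdeg u = a" using assms(1) by (simp add: homog_def)
    then have "mdeg (u + v) \<noteq> b" using that by simp
    then have "w (u + v) = 0" using assms(2) by (simp add: Dsp_def)
    then show "lkp \<mu> u * w (u + v) = 0" by simp
  qed
  show "act \<mu> w \<in> Dsp (b - a)"
    unfolding Dsp_def
  proof (safe)
    fix v assume "mdeg v \<noteq> b - a"
    show "act \<mu> w v = 0"
    proof (cases "a \<le> b")
      case True then show ?thesis using z \<open>mdeg v \<noteq> b - a\<close> by auto
    next
      case False then show ?thesis using z by auto
    qed
  qed
  show "a > b \<Longrightarrow> act \<mu> w = (\<lambda>_. 0)" using z by auto
qed


definition filt :: "(mono \<Rightarrow> bool) \<Rightarrow> 'k::comm_ring_1 mpoly3 \<Rightarrow> 'k mpoly3" where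
  "filt P F = (\<Sum>m\<in>{m\<in>kys F. P m}. cst (lkp F m) * mon m)"

lemma lookup_filt: "lkp (filt P F) k = (if P k then lkp F k else 0)"
proof -
  have "lkp (filt P F) k = (\<Sum>m\<in>{m\<in>kys F. P m}. lkp (cst (lkp F m) * mon m) k)"
    by (simp add: filt_def lookup_sum)
  also have "\<dots> = (\<Sum>m\<in>{m\<in>kys F. P m}. if k = m then lkp F m else 0)"
    by (intro sum.cong) (auto simp: lookup_mon)
  also have "\<dots> = (if P k then lkp F k else 0)"
    by (simp add: sum.delta in_keys_iff)
  finally show ?thesis .
qed

lemma filt_eqI: "(\<And>k. lkp F k = lkp G k) \<Longrightarrow> F = G"
  by (rule poly_mapping_eqI)

lemma filt_split: "F = filt P F + filt (\<lambda>m. \<not> P m) F"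
  by (rule poly_mapping_eqI) (simp add: lookup_add lookup_filt)

lemma filt_add: "filt P (F + G) = filt P F + filt P G"
  by (rule poly_mapping_eqI) (simp add: lookup_add lookup_filt)

lemma filt_diff: "filt P (F - G) = filt P F - filt P G"
  by (rule poly_mapping_eqI) (simp add: lookup_minus lookup_filt)

lemma filt_uminus: "filt P (- F) = - filt P F"
  by (rule poly_mapping_eqI) (simp add: lookup_filt)

lemma filt_zero[simp]: "filt P 0 = 0"
  by (rule poly_mapping_eqI) (simp add: lookup_filt)

lemma filt_cst_mult: "filt P (cst c * F) = cst c * filt P F"
  by (rule poly_mapping_eqI) (simp add: lookup_filt)

lemma filt_sum: "finite I \<Longrightarrow> filt P (\<Sum>i\<in>I. F i) = (\<Sum>i\<in>I. filt P (F i))"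
  by (induction I rule: finite_induct) (simp_all add: filt_add)

lemma filt_False: "filt (\<lambda>_. False) F = 0"
  by (rule poly_mapping_eqI) (simp add: lookup_filt)

lemma filt_True: "filt (\<lambda>_. True) F = F"
  by (rule poly_mapping_eqI) (simp add: lookup_filt)

lemma keys_filt: "k \<in> kys (filt P F) \<Longrightarrow> P k \<and> k \<in> kys F"
  by (simp add: in_keys_iff lookup_filt split: if_splits)

lemma filt_mon_mult: "filt P (mon m * F) = mon m * filt (\<lambda>q. P (m + q)) F"
proof (rule poly_mapping_eqI)
  fix k
  show "lkp (filt P (mon m * F)) k = lkp (mon m * filt (\<lambda>q. P (m + q)) F) k"
  proof (cases "\<exists>q. k = m + q")
    case True
    then obtain q where "k = m + q" by blast
    then show ?thesis by (simp add: lookup_filt)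
  next
    case False
    then show ?thesis by (simp add: lookup_filt lookup_mon_mult_nd)
  qed
qed

lemma filt_cong: "(\<And>k. k \<in> kys F \<Longrightarrow> P k = Q k) \<Longrightarrow> filt P F = filt Q F"
  by (rule poly_mapping_eqI) (auto simp: lookup_filt in_keys_iff)

lemma filt_id: "(\<And>k. k \<in> kys F \<Longrightarrow> P k) \<Longrightarrow> filt P F = F"
  by (rule poly_mapping_eqI) (auto simp: lookup_filt in_keys_iff)

lemma filt_null: "(\<And>k. k \<in> kys F \<Longrightarrow> \<not> P k) \<Longrightarrow> filt P F = 0"
  by (rule poly_mapping_eqI) (auto simp: lookup_filt in_keys_iff)

subsection \<open>Divisibility by monomials\<close>

lemma mon_dvd_keys:
  assumes "\<And>k. k \<in> kys F \<Longrightarrow> \<exists>q. k = m + q"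
  shows "F = mon m * (\<Sum>k\<in>kys F. cst (lkp F k) * mon (k - m) :: 'k::comm_ring_1 mpoly3)"
proof -
  have "mon m * (\<Sum>k\<in>kys F. cst (lkp F k) * mon (k - m)) = (\<Sum>k\<in>kys F. mon m * (cst (lkp F k) * mon (k - m)) :: 'k mpoly3)"
    by (rule sum_distrib_left)
  also have "\<dots> = (\<Sum>k\<in>kys F. cst (lkp F k) * mon k)"
  proof (rule sum.cong[OF refl])
    fix k assume "k \<in> kys F"
    then obtain q where q: "k = m + q" using assms by blast
    have "mon m * (cst (lkp F k) * mon (k - m)) = cst (lkp F k) * (mon m * mon (k - m) :: 'k mpoly3)"
      by (rule mult.left_commute)
    also have "mon m * mon (k - m) = (mon (m + (k - m)) :: 'k mpoly3)"
      by (simp only: mon_add)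
    also have "m + (k - m) = k" using q by simp
    finally show "mon m * (cst (lkp F k) * mon (k - m)) = (cst (lkp F k) * mon k :: 'k mpoly3)" .
  qed
  finally show ?thesis using poly_expand[of F] by simp
qed

lemma mon_dvd_keysE:
  assumes "\<And>k. k \<in> kys F \<Longrightarrow> \<exists>q. k = m + q"
  obtains G where "F = mon m * (G :: 'k::comm_ring_1 mpoly3)"
  using mon_dvd_keys[OF assms] by blast

lemma keys_mon_multE: "k \<in> kys (mon m * F) \<Longrightarrow> \<exists>q. k = m + q \<and> q \<in> kys F"
  unfolding keys_mon_mult by blast

definition vdiv :: "var3 \<Rightarrow> nat \<Rightarrow> 'k::comm_ring_1 mpoly3 \<Rightarrow> bool" where
  "vdiv v j F \<longleftrightarrow> (\<forall>k\<in>kys F. j \<le> lkp k v)"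

lemma single_le_iff: "(\<forall>v'. lkp (Poly_Mapping.single v j) v' \<le> lkp (k::mono) v') \<longleftrightarrow> j \<le> lkp k v"
  by (auto simp: lookup_single when_def)

lemma vdiv_iff: "vdiv v j F \<longleftrightarrow> (\<exists>G. F = mon (Poly_Mapping.single v j) * G)"
proof
  assume a: "vdiv v j F"
  have "\<exists>q. k = Poly_Mapping.single v j + q" if "k \<in> kys F" for k
  proof -
    have "j \<le> lkp k v" using a that by (simp add: vdiv_def)
    then show ?thesis by (simp only: mono_dvd_iff single_le_iff)
  qed
  then obtain G where "F = mon (Poly_Mapping.single v j) * G" by (rule mon_dvd_keysE)
  then show "\<exists>G. F = mon (Poly_Mapping.single v j) * G" by blast
next
  assume "\<exists>G. F = mon (Poly_Mapping.single v j) * G"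
  then obtain G where G: "F = mon (Poly_Mapping.single v j) * G" by blast
  show "vdiv v j F" unfolding vdiv_def
  proof
    fix k assume "k \<in> kys F"
    then obtain q where "k = Poly_Mapping.single v j + q" using G keys_mon_multE by blast
    then show "j \<le> lkp k v" by (simp add: lookup_add)
  qed
qed

lemma vdiv_mon_mult: "lkp m v = 0 \<Longrightarrow> vdiv v j (mon m * F) \<longleftrightarrow> vdiv v j F"
  unfolding vdiv_def keys_mon_mult by (simp add: lookup_add)

subsection \<open>Homogeneous components\<close>

definition hc :: "nat \<Rightarrow> 'k::comm_ring_1 mpoly3 \<Rightarrow> 'k mpoly3" where
  "hc d F = filt (\<lambda>m. mdeg m = d) F"

lemma lookup_hc: "lkp (hc d F) k = (if mdeg k = d then lkp F k else 0)"
  by (simp add: hc_def lookup_filt)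

lemma hc_add: "hc d (F + G) = hc d F + hc d G" by (simp add: hc_def filt_add)
lemma hc_diff: "hc d (F - G) = hc d F - hc d G" by (simp add: hc_def filt_diff)
lemma hc_uminus: "hc d (- F) = - hc d F" by (simp add: hc_def filt_uminus)
lemma hc_zero[simp]: "hc d 0 = 0" by (simp add: hc_def)
lemma hc_cst_mult: "hc d (cst c * F) = cst c * hc d F" by (simp add: hc_def filt_cst_mult)
lemma hc_sum: "finite I \<Longrightarrow> hc d (\<Sum>i\<in>I. F i) = (\<Sum>i\<in>I. hc d (F i))" by (simp add: hc_def filt_sum)

lemma homog_hc: "homog d (hc d F)"
  unfolding homog_def hc_def using keys_filt by blast

lemma hc_homog: "homog d F \<Longrightarrow> hc d F = F"
  unfolding hc_def homog_def by (rule filt_id) auto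

lemma hc_homog_other: "homog d F \<Longrightarrow> e \<noteq> d \<Longrightarrow> hc e F = 0"
  unfolding hc_def homog_def by (rule filt_null) auto

lemma hc_mon_mult: "hc d (mon m * F) = (if mdeg m \<le> d then mon m * hc (d - mdeg m) F else 0)"
proof -
  have "hc d (mon m * F) = mon m * filt (\<lambda>q. mdeg (m + q) = d) F"
    by (simp add: hc_def filt_mon_mult)
  also have "\<dots> = (if mdeg m \<le> d then mon m * hc (d - mdeg m) F else 0)"
  proof (cases "mdeg m \<le> d")
    case True
    then have "filt (\<lambda>q. mdeg (m + q) = d) F = hc (d - mdeg m) F"
      unfolding hc_def by (intro filt_cong) auto
    then show ?thesis using True by simp
  next
    case False
    then have "filt (\<lambda>q. mdeg (m + q) = d) F = 0"
      by (intro filt_null) auto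
    then show ?thesis using False by simp
  qed
  finally show ?thesis .
qed

lemma hc_homog_mult:
  assumes "homog e c"
  shows "hc d (c * F) = (if e \<le> d then c * hc (d - e) F else 0)"
proof -
  have "c * F = (\<Sum>m\<in>kys c. cst (lkp c m) * (mon m * F))"
    by (subst poly_expand[of c]) (simp add: sum_distrib_right mult.assoc)
  then have "hc d (c * F) = (\<Sum>m\<in>kys c. cst (lkp c m) * hc d (mon m * F))"
    by (simp add: hc_sum hc_cst_mult)
  also have "\<dots> = (\<Sum>m\<in>kys c. cst (lkp c m) * (if e \<le> d then mon m * hc (d - e) F else 0))"
    using assms by (intro sum.cong refl) (simp add: hc_mon_mult homog_def)
  also have "\<dots> = (if e \<le> d then c * hc (d - e) F else 0)"
  proof (cases "e \<le> d")
    case True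
    then show ?thesis
      by (subst (3) poly_expand[of c]) (simp add: sum_distrib_right mult.assoc)
  qed simp
  finally show ?thesis .
qed

lemma hc_decomp:
  assumes "\<And>m. m \<in> kys F \<Longrightarrow> mdeg m \<le> N"
  shows "F = (\<Sum>d\<le>N. hc d F)"
proof (rule poly_mapping_eqI)
  fix k
  have "lkp (\<Sum>d\<le>N. hc d F) k = (\<Sum>d\<le>N. if mdeg k = d then lkp F k else 0)"
    by (simp add: lookup_sum lookup_hc)
  also have "\<dots> = (if mdeg k \<le> N then lkp F k else 0)"
    by (simp add: sum.delta')
  also have "\<dots> = lkp F k"
    using assms by (auto simp: in_keys_iff)
  finally show "lkp F k = lkp (\<Sum>d\<le>N. hc d F) k" by simp
qed

lemma deg_bound: "\<exists>N. \<forall>m\<in>kys F. mdeg m \<le> N"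
  by (rule exI[of _ "Max (mdeg ` kys F)"]) simp

lemma hc_eq_zero_all: "(\<And>d. hc d F = 0) \<Longrightarrow> F = 0"
  by (rule poly_mapping_eqI) (metis lookup_hc lookup_zero)

subsection \<open>x-free part\<close>

definition rho :: "'k::comm_ring_1 mpoly3 \<Rightarrow> 'k mpoly3" where
  "rho F = filt (\<lambda>m. lkp m VX = 0) F"

lemma rho_add: "rho (F + G) = rho F + rho G" by (simp add: rho_def filt_add)
lemma rho_diff: "rho (F - G) = rho F - rho G" by (simp add: rho_def filt_diff)
lemma rho_uminus: "rho (- F) = - rho F" by (simp add: rho_def filt_uminus)
lemma rho_zero[simp]: "rho 0 = 0" by (simp add: rho_def)
lemma rho_cst_mult: "rho (cst c * F) = cst c * rho F" by (simp add: rho_def filt_cst_mult)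
lemma rho_sum: "finite I \<Longrightarrow> rho (\<Sum>i\<in>I. F i) = (\<Sum>i\<in>I. rho (F i))" by (simp add: rho_def filt_sum)

lemma rho_mon_mult: "rho (mon m * F) = (if lkp m VX = 0 then mon m * rho F else 0)"
proof -
  have "rho (mon m * F) = mon m * filt (\<lambda>q. lkp (m + q) VX = 0) F"
    by (simp add: rho_def filt_mon_mult)
  also have "\<dots> = (if lkp m VX = 0 then mon m * rho F else 0)"
  proof (cases "lkp m VX = 0")
    case True
    then have "filt (\<lambda>q. lkp (m + q) VX = 0) F = rho F"
      unfolding rho_def by (intro filt_cong) (auto simp: lookup_add)
    then show ?thesis using True by simp
  next
    case False
    then have "filt (\<lambda>q. lkp (m + q) VX = 0) F = 0"
      by (intro filt_null) (auto simp: lookup_add)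
    then show ?thesis using False by simp
  qed
  finally show ?thesis .
qed

lemma rho_rho: "rho (rho F) = rho F"
  by (rule poly_mapping_eqI) (simp add: rho_def lookup_filt)

abbreviation X1 :: mono where "X1 \<equiv> Poly_Mapping.single VX 1"
abbreviation Y1 :: mono where "Y1 \<equiv> Poly_Mapping.single VY 1"
abbreviation Z1 :: mono where "Z1 \<equiv> Poly_Mapping.single VZ 1"

lemma rho_Xp_mult: "rho (Xp * F) = 0"
  by (simp add: Xp_def rho_mon_mult lookup_single)

lemma rho_Yp_mult: "rho (Yp * F) = Yp * rho F"
  by (simp add: Yp_def rho_mon_mult lookup_single)

lemma rho_Zp_mult: "rho (Zp * F) = Zp * rho F"
  by (simp add: Zp_def rho_mon_mult lookup_single)

lemma rho_decomp: "\<exists>G. F = rho F + Xp * G"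
proof -
  have s: "F = rho F + filt (\<lambda>m. \<not> lkp m VX = 0) F"
    unfolding rho_def by (rule filt_split)
  have "\<exists>q. k = X1 + q" if "k \<in> kys (filt (\<lambda>m. \<not> lkp m VX = 0) F)" for k
  proof -
    have "lkp k VX \<noteq> 0" using keys_filt[OF that] by blast
    then have "1 \<le> lkp k VX" by simp
    then show ?thesis by (simp only: mono_dvd_iff single_le_iff)
  qed
  then obtain G where "filt (\<lambda>m. \<not> lkp m VX = 0) F = mon X1 * G" by (rule mon_dvd_keysE)
  then have "F = rho F + Xp * G" using s by (simp add: Xp_def)
  then show ?thesis by blast
qed

lemma rho_eq_zero_iff: "rho F = 0 \<longleftrightarrow> (\<exists>G. F = Xp * G)"
proof
  assume "rho F = 0"
  then show "\<exists>G. F = Xp * G" using rho_decomp[of F] by simp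
next
  assume "\<exists>G. F = Xp * G"
  then obtain G where "F = Xp * G" by blast
  then show "rho F = 0" by (simp add: rho_Xp_mult)
qed

lemma rho_mult: "rho (F * G) = rho F * rho G"
proof -
  obtain A where A: "F = rho F + Xp * A" using rho_decomp by blast
  obtain B where B: "G = rho G + Xp * B" using rho_decomp by blast
  have r: "rho (rho F * H) = rho F * rho H" for H
  proof -
    have "rho F * H = (\<Sum>m\<in>kys (rho F). cst (lkp (rho F) m) * (mon m * H))"
      by (subst poly_expand[of "rho F"]) (simp add: sum_distrib_right mult.assoc)
    then have "rho (rho F * H) = (\<Sum>m\<in>kys (rho F). cst (lkp (rho F) m) * rho (mon m * H))"
      by (simp add: rho_sum rho_cst_mult)
    also have "\<dots> = (\<Sum>m\<in>kys (rho F). cst (lkp (rho F) m) * (mon m * rho H))"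
    proof (intro sum.cong refl)
      fix m assume "m \<in> kys (rho F)"
      then have "lkp m VX = 0" unfolding rho_def using keys_filt by blast
      then show "cst (lkp (rho F) m) * rho (mon m * H) = cst (lkp (rho F) m) * (mon m * rho H)"
        by (simp add: rho_mon_mult)
    qed
    also have "\<dots> = rho F * rho H"
      by (subst (3) poly_expand[of "rho F"]) (simp add: sum_distrib_right mult.assoc)
    finally show ?thesis .
  qed
  have "F * G = (rho F + Xp * A) * G" using A by simp
  also have "\<dots> = rho F * G + Xp * (A * G)" by (simp add: algebra_simps)
  finally have "F * G = rho F * G + Xp * (A * G)" .
  then have "rho (F * G) = rho (rho F * G)" by (simp add: rho_add rho_Xp_mult)
  also have "\<dots> = rho F * rho G" by (rule r)
  finally show ?thesis .
qed

lemma mon_nz: "(mon m :: 'k::field mpoly3) \<noteq> 0"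
proof
  assume "(mon m :: 'k mpoly3) = 0"
  then have "lkp (mon m :: 'k mpoly3) m = 0" by simp
  then show False by (simp add: lookup_mon)
qed
lemma Xp_nz: "(Xp :: 'k::field mpoly3) \<noteq> 0" unfolding Xp_def by (rule mon_nz)
lemma Yp_nz: "(Yp :: 'k::field mpoly3) \<noteq> 0" unfolding Yp_def by (rule mon_nz)
lemma Zp_nz: "(Zp :: 'k::field mpoly3) \<noteq> 0" unfolding Zp_def by (rule mon_nz)


definition ym :: "nat \<Rightarrow> mono" where "ym a = Poly_Mapping.single VY a"
definition zm :: "nat \<Rightarrow> mono" where "zm a = Poly_Mapping.single VZ a"
definition mm :: "nat \<Rightarrow> nat \<Rightarrow> mono" where "mm d i = ym (d - i) + zm i"

lemma lk_ym[simp]: "lkp (ym a) VX = 0" "lkp (ym a) VY = a" "lkp (ym a) VZ = 0"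
  by (simp_all add: ym_def lookup_single)
lemma lk_zm[simp]: "lkp (zm a) VX = 0" "lkp (zm a) VY = 0" "lkp (zm a) VZ = a"
  by (simp_all add: zm_def lookup_single)
lemma lk_mm[simp]: "lkp (mm d i) VX = 0" "lkp (mm d i) VY = d - i" "lkp (mm d i) VZ = i"
  by (simp_all add: mm_def lookup_add)
lemma lk_X1[simp]: "lkp X1 VX = 1" "lkp X1 VY = 0" "lkp X1 VZ = 0"
  by (simp_all add: lookup_single)

lemma mdeg_ym[simp]: "mdeg (ym a) = a" by (simp add: mdeg_def)
lemma mdeg_zm[simp]: "mdeg (zm a) = a" by (simp add: mdeg_def)
lemma mdeg_mm: "i \<le> d \<Longrightarrow> mdeg (mm d i) = d" by (simp add: mdeg_def)

lemma ym_add: "ym (a + b) = ym a + ym b" by (simp add: ym_def single_add)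
lemma zm_add: "zm (a + b) = zm a + zm b" by (simp add: zm_def single_add)
lemma ym0[simp]: "ym 0 = 0" by (simp add: ym_def)
lemma zm0[simp]: "zm 0 = 0" by (simp add: zm_def)

lemma Yp_mon: "Yp = mon (ym 1)" by (simp add: Yp_def ym_def)
lemma Zp_mon: "Zp = mon (zm 1)" by (simp add: Zp_def zm_def)
lemma Xp_mon: "Xp = mon X1" by (simp add: Xp_def)

lemma mm_Y: "i \<le> d \<Longrightarrow> ym 1 + mm d i = mm (Suc d) i"
  by (rule mono_eqI) (simp_all add: lookup_add)
lemma mm_Z: "i \<le> d \<Longrightarrow> zm 1 + mm d i = mm (Suc d) (Suc i)"
  by (rule mono_eqI) (simp_all add: lookup_add)

lemma Yp_mm: "i \<le> d \<Longrightarrow> Yp * mon (mm d i) = mon (mm (Suc d) i)"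
proof -
  assume "i \<le> d"
  have "Yp * mon (mm d i) = mon (ym 1 + mm d i)" by (simp only: Yp_mon mon_add)
  also have "ym 1 + mm d i = mm (Suc d) i" using \<open>i \<le> d\<close> by (rule mm_Y)
  finally show ?thesis .
qed
lemma Zp_mm: "i \<le> d \<Longrightarrow> Zp * mon (mm d i) = mon (mm (Suc d) (Suc i))"
proof -
  assume "i \<le> d"
  have "Zp * mon (mm d i) = mon (zm 1 + mm d i)" by (simp only: Zp_mon mon_add)
  also have "zm 1 + mm d i = mm (Suc d) (Suc i)" using \<open>i \<le> d\<close> by (rule mm_Z)
  finally show ?thesis .
qed

lemma mm_inj: "i \<le> d \<Longrightarrow> j \<le> d \<Longrightarrow> mm d i = mm d j \<Longrightarrow> i = j"
  by (metis lk_mm(3))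

lemma M0_eq: "M0 d = mm d ` {..d}"
proof (rule set_eqI)
  fix m
  show "m \<in> M0 d \<longleftrightarrow> m \<in> mm d ` {..d}"
  proof
    assume "m \<in> M0 d"
    then have a: "lkp m VX = 0" "mdeg m = d" by (auto simp: M0_def)
    then have "m = mm d (lkp m VZ)" by (intro mono_eqI) (auto simp: mdeg_def)
    moreover have "lkp m VZ \<le> d" using a by (simp add: mdeg_def)
    ultimately show "m \<in> mm d ` {..d}" by blast
  next
    assume "m \<in> mm d ` {..d}"
    then show "m \<in> M0 d" by (auto simp: M0_def mdeg_mm)
  qed
qed

lemma inj_mm: "inj_on (mm d) {..d}"
  by (meson atMost_iff inj_onI mm_inj)

lemma finite_M0[simp]: "finite (M0 d)" by (simp add: M0_eq)

lemma card_M0: "card (M0 d) = Suc d"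
  by (simp add: M0_eq card_image[OF inj_mm])

lemma sum_M0: "(\<Sum>m\<in>M0 d. f m) = (\<Sum>i\<le>d. f (mm d i))"
  by (simp add: M0_eq sum.reindex[OF inj_mm])

lemma mm_in_M0: "i \<le> d \<Longrightarrow> mm d i \<in> M0 d" by (auto simp: M0_eq)

lemma M0_mdeg: "m \<in> M0 d \<Longrightarrow> mdeg m = d" by (simp add: M0_def)
lemma M0_X: "m \<in> M0 d \<Longrightarrow> lkp m VX = 0" by (simp add: M0_def)

lemma mm_dd: "mm d d = zm d" by (simp add: mm_def)
lemma mm_d0: "mm d 0 = ym d" by (simp add: mm_def)

lemma act_mon_dual_add: "act (mon a) (dual (a + w)) = dual w"
  by (rule ext) (simp add: act_mon dual_def)

lemma act_mon_dual_nd: "(\<And>q. m \<noteq> a + q) \<Longrightarrow> act (mon a) (dual m) = (\<lambda>_. 0)"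
  by (rule ext) (auto simp: act_mon dual_def)

lemma act_Y_dual_mm: "i \<le> d \<Longrightarrow> act Yp (dual (mm (Suc d) i)) = dual (mm d i)"
proof -
  assume "i \<le> d"
  then have "mm (Suc d) i = ym 1 + mm d i" by (simp only: mm_Y)
  then show ?thesis by (simp only: Yp_mon act_mon_dual_add)
qed
lemma act_Z_dual_mm: "i \<le> d \<Longrightarrow> act Zp (dual (mm (Suc d) (Suc i))) = dual (mm d i)"
proof -
  assume "i \<le> d"
  then have "mm (Suc d) (Suc i) = zm 1 + mm d i" by (simp only: mm_Z)
  then show ?thesis by (simp only: Zp_mon act_mon_dual_add)
qed
lemma act_Y_dual_zm: "act Yp (dual (zm d)) = (\<lambda>_. 0)"
  unfolding Yp_mon by (rule act_mon_dual_nd) (metis lk_ym(2) lk_zm(2) lookup_add add_is_0 one_neq_zero)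
lemma act_Z_dual_ym: "act Zp (dual (ym d)) = (\<lambda>_. 0)"
  unfolding Zp_mon by (rule act_mon_dual_nd) (metis lk_ym(3) lk_zm(3) lookup_add add_is_0 one_neq_zero)
lemma act_X_dual_M0: "lkp m VX = 0 \<Longrightarrow> act Xp (dual m) = (\<lambda>_. 0)"
  unfolding Xp_mon by (rule act_mon_dual_nd) (metis lk_X1(1) lookup_add add_is_0 one_neq_zero)


definition hb :: "nat \<Rightarrow> (nat \<Rightarrow> 'k::comm_ring_1 mpoly3) \<Rightarrow> nat \<Rightarrow> 'k mpoly3" where
  "hb n g i = (if 0 < i then Yp * g (i - 1) else 0) - (if i < n then Zp * g i else 0)"

lemma mon_ymSuc: "mon (ym (Suc n)) = Yp * (mon (mm n 0) :: 'k::comm_ring_1 mpoly3)"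
proof -
  have "ym (Suc n) = ym 1 + ym n" by (simp add: ym_add[symmetric])
  then show ?thesis by (simp only: Yp_mon mon_add mm_d0)
qed

lemma S1:
  fixes a :: "nat \<Rightarrow> 'k::field mpoly3"
  assumes "(\<Sum>i\<le>n. mon (mm n i) * a i) = 0"
  shows "\<exists>g. \<forall>i\<le>n. a i = hb n g i"
  using assms
proof (induction n arbitrary: a)
  case 0
  then have "a 0 = 0" by (simp add: mm_def)
  then show ?case by (auto simp: hb_def)
next
  case (Suc n)
  define T where "T = (\<Sum>i\<le>n. mon (mm n i) * a (Suc i))"
  have "(\<Sum>i\<le>Suc n. mon (mm (Suc n) i) * a i) = mon (mm (Suc n) 0) * a 0 + (\<Sum>i\<le>n. mon (mm (Suc n) (Suc i)) * a (Suc i))"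
    by (rule sum.atMost_Suc_shift)
  also have "(\<Sum>i\<le>n. mon (mm (Suc n) (Suc i)) * a (Suc i)) = Zp * T"
    unfolding T_def sum_distrib_left
    by (intro sum.cong refl) (simp add: Zp_mm[symmetric] mult.assoc)
  finally have e: "mon (ym (Suc n)) * a 0 + Zp * T = 0" using Suc.prems by (simp add: mm_d0)
  then have "mon (ym (Suc n)) * a 0 = Zp * (- T)" by (simp add: add_eq_0_iff)
  then have "vdiv VZ 1 (mon (ym (Suc n)) * a 0)" unfolding vdiv_iff Zp_def by blast
  then have "vdiv VZ 1 (a 0)" by (simp add: vdiv_mon_mult)
  then obtain c where c: "a 0 = Zp * c" unfolding vdiv_iff Zp_def by blast
  have "Zp * (mon (ym (Suc n)) * c + T) = 0" using e c by (simp add: algebra_simps)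
  then have e2: "mon (ym (Suc n)) * c + T = 0" using Zp_nz[where 'k='k] mult_eq_0_iff by blast
  define a' where "a' i = a (Suc i) + (if i = 0 then Yp * c else 0)" for i
  have "(\<Sum>i\<le>n. mon (mm n i) * a' i) = T + (\<Sum>i\<le>n. if i = 0 then mon (mm n 0) * (Yp * c) else 0)"
    unfolding a'_def T_def distrib_left sum.distrib by (intro arg_cong2[where f="(+)"] refl sum.cong) auto
  also have "\<dots> = T + mon (mm n 0) * (Yp * c)" by (simp add: sum.delta)
  also have "\<dots> = 0" using e2 by (simp add: mon_ymSuc algebra_simps)
  finally obtain g' where g': "\<forall>i\<le>n. a' i = hb n g' i" using Suc.IH by blast
  define g where "g i = (if i = 0 then - c else g' (i - 1))" for i
  have "a i = hb (Suc n) g i" if "i \<le> Suc n" for i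
  proof (cases i)
    case 0
    then show ?thesis using c by (simp add: hb_def g_def)
  next
    case (Suc k)
    then have k: "k \<le> n" using that by simp
    show ?thesis
    proof (cases k)
      case 0
      have "a' 0 = hb n g' 0" using g' by simp
      then have "a 1 = hb n g' 0 - Yp * c" by (simp add: a'_def eq_diff_eq)
      define X where "X = (if 0 < n then Zp * g' 0 else 0)"
      have h2: "hb (Suc n) g 1 = - (Yp * c) - X" by (simp add: hb_def g_def X_def)
      have h3: "hb n g' 0 = - X" by (simp add: hb_def X_def)
      have "a 1 = - X - Yp * c" using \<open>a 1 = hb n g' 0 - Yp * c\<close> h3 by simp
      also have "\<dots> = - (Yp * c) - X" by algebra
      also have "\<dots> = hb (Suc n) g 1" using h2 by simp
      finally show ?thesis using Suc 0 by simp
    next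
      case (Suc k')
      have "a' k = hb n g' k" using g' k by simp
      then show ?thesis using \<open>i = Suc k\<close> Suc by (simp add: hb_def g_def a'_def)
    qed
  qed
  then show ?case by blast
qed


lemma act_mult_rev: "act (A * B) w = act B (act A w)"
  by (metis act_mult mult.commute)

lemma act_lin3: "act (A - B + C) w v = act A w v - act B w v + act C w v"
  by (simp add: act_add act_diff)

lemma zm_dvd_mono: "(\<exists>q. k = zm j + q) \<longleftrightarrow> j \<le> lkp k VZ"
  unfolding zm_def by (simp only: mono_dvd_iff single_le_iff)
lemma ym_dvd_mono: "(\<exists>q. k = ym j + q) \<longleftrightarrow> j \<le> lkp k VY"
  unfolding ym_def by (simp only: mono_dvd_iff single_le_iff)
lemma X1_dvd_mono: "(\<exists>q. k = X1 + q) \<longleftrightarrow> 1 \<le> lkp k VX"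
  by (simp only: mono_dvd_iff single_le_iff)

lemma S2:
  fixes h :: "nat \<Rightarrow> 'k::field mpoly3"
  assumes "\<forall>v. (\<Sum>j<n. act (h j) (dual (mm (n - 1) j)) v) = 0"
  shows "\<exists>u c. \<forall>j<n. h j = Zp * u j - Yp * u (Suc j) + Xp * c j"
  using assms
proof (induction n arbitrary: h)
  case 0
  then show ?case by simp
next
  case (Suc n)
  have P: "(\<Sum>j<Suc n. act (h j) (dual (mm n j)) v) = 0" for v
    using Suc.prems by simp
  have A: "\<forall>v. (\<Sum>j<n. act (h j) (dual (mm (n - 1) j)) v) = 0"
  proof
    fix v
    have "0 = act Yp (\<lambda>v. \<Sum>j<Suc n. act (h j) (dual (mm n j)) v) v"
      using P by simp
    also have "\<dots> = (\<Sum>j<Suc n. act (h j) (act Yp (dual (mm n j))) v)"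
      by (simp only: act_wsum[OF finite_lessThan] act_comm[of Yp])
    also have "\<dots> = (\<Sum>j<n. act (h j) (act Yp (dual (mm n j))) v)"
      by (simp add: mm_dd act_Y_dual_zm)
    also have "\<dots> = (\<Sum>j<n. act (h j) (dual (mm (n - 1) j)) v)"
    proof (intro sum.cong refl)
      fix j assume "j \<in> {..<n}"
      then obtain n' where n': "n = Suc n'" "j \<le> n'" by (cases n) auto
      have e: "act Yp (dual (mm (Suc n') j)) = (dual (mm n' j) :: 'k dp)" using n'(2) by (rule act_Y_dual_mm)
      show "act (h j) (act Yp (dual (mm n j))) v = act (h j) (dual (mm (n - 1) j)) v"
        unfolding n'(1) e by simp
    qed
    finally show "(\<Sum>j<n. act (h j) (dual (mm (n - 1) j)) v) = 0" by simp
  qed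
  obtain u' c' where uc: "\<forall>j<n. h j = Zp * u' j - Yp * u' (Suc j) + Xp * c' j"
    using Suc.IH[OF A] by blast
  define t where "t = h n - Zp * u' n"
  have B: "act t (dual (zm n)) v = 0" for v
  proof -
    define Zt where "Zt j = (if j = 0 then 0 else act (u' j) (dual (mm (n - 1) (j - 1))) v)" for j
    have actZ: "act (u' j) (act Zp (dual (mm n j))) v = Zt j" if jn: "j \<le> n" for j
    proof (cases j)
      case 0
      then show ?thesis by (simp add: Zt_def mm_d0 act_Z_dual_ym)
    next
      case (Suc j')
      then obtain n' where n': "n = Suc n'" "j' \<le> n'" using jn by (cases n) auto
      have e: "act Zp (dual (mm (Suc n') (Suc j'))) = (dual (mm n' j') :: 'k dp)" using n'(2) by (rule act_Z_dual_mm)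
      then have "act Zp (dual (mm n j)) = (dual (mm (n - 1) j') :: 'k dp)"
        using n'(1) Suc by simp
      then show ?thesis using Suc by (simp add: Zt_def)
    qed
    have t1: "act (h j) (dual (mm n j)) v = Zt j - Zt (Suc j)" if jn: "j < n" for j
    proof -
      have "act (h j) (dual (mm n j)) v = act (Zp * u' j) (dual (mm n j)) v - act (Yp * u' (Suc j)) (dual (mm n j)) v + act (Xp * c' j) (dual (mm n j)) v"
        using uc that by (simp add: act_lin3)
      also have "act (Zp * u' j) (dual (mm n j)) v = Zt j"
        using actZ[of j] that by (simp add: act_mult_rev)
      also have "act (Yp * u' (Suc j)) (dual (mm n j)) v = Zt (Suc j)"
      proof -
        obtain n' where n': "n = Suc n'" "j \<le> n'" using jn by (cases n) auto
        have e: "act Yp (dual (mm (Suc n') j)) = (dual (mm n' j) :: 'k dp)" using n'(2) by (rule act_Y_dual_mm)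
        then have "act Yp (dual (mm n j)) = (dual (mm (n - 1) j) :: 'k dp)"
          using n'(1) by simp
        then show ?thesis by (simp add: act_mult_rev Zt_def)
      qed
      also have "act (Xp * c' j) (dual (mm n j)) v = 0"
        by (simp add: act_mult_rev act_X_dual_M0)
      finally show ?thesis by simp
    qed
    have t2: "act (h n) (dual (mm n n)) v = act t (dual (zm n)) v + Zt n"
    proof -
      have "h n = t + Zp * u' n" by (simp add: t_def)
      then have "act (h n) (dual (mm n n)) v = act t (dual (zm n)) v + act (Zp * u' n) (dual (mm n n)) v"
        by (simp add: act_add mm_dd)
      also have "act (Zp * u' n) (dual (mm n n)) v = Zt n"
        using actZ[of n] by (simp add: act_mult_rev)
      finally show ?thesis .
    qed
    have "0 = (\<Sum>j<n. act (h j) (dual (mm n j)) v) + act (h n) (dual (mm n n)) v"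
      using P[of v] by simp
    also have "(\<Sum>j<n. act (h j) (dual (mm n j)) v) = (\<Sum>j<n. Zt j - Zt (Suc j))"
      using t1 by simp
    also have "\<dots> = Zt 0 - Zt n" by (rule sum_lessThan_telescope')
    finally show ?thesis using t2 by (simp add: Zt_def)
  qed
  have C: "lkp t (zm k) = 0" if "k \<le> n" for k
  proof -
    have "zm n = zm (n - k) + zm k" using that by (simp add: zm_add[symmetric])
    then have "lkp t (zm k) = act t (dual (zm n)) (zm (n - k))"
      by (simp add: act_eval pair_dual)
    then show ?thesis using B by simp
  qed
  define P1 where "P1 m = (lkp m VX \<noteq> 0)" for m :: mono
  define P2 where "P2 m = (lkp m VX = 0 \<and> lkp m VY \<noteq> 0)" for m :: mono
  define P3 where "P3 m = (lkp m VX = 0 \<and> lkp m VY = 0)" for m :: mono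
  have tdec: "t = filt P1 t + filt P2 t + filt P3 t"
    by (rule poly_mapping_eqI) (simp add: lookup_add lookup_filt P1_def P2_def P3_def)
  obtain C where f1: "filt P1 t = mon X1 * C"
  proof (rule mon_dvd_keysE)
    fix k assume "k \<in> kys (filt P1 t)"
    then have "1 \<le> lkp k VX" using keys_filt[of k P1 t] by (simp add: P1_def)
    then show "\<exists>q. k = X1 + q" by (simp only: X1_dvd_mono)
  qed
  obtain A where f2: "filt P2 t = mon (ym 1) * A"
  proof (rule mon_dvd_keysE)
    fix k assume "k \<in> kys (filt P2 t)"
    then have "1 \<le> lkp k VY" using keys_filt[of k P2 t] by (simp add: P2_def)
    then show "\<exists>q. k = ym 1 + q" by (simp only: ym_dvd_mono)
  qed
  obtain Bq where f3: "filt P3 t = mon (zm (Suc n)) * Bq"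
  proof (rule mon_dvd_keysE)
    fix k assume "k \<in> kys (filt P3 t)"
    then have k: "P3 k" "k \<in> kys t" using keys_filt[of k P3 t] by auto
    then have "k = zm (lkp k VZ)" by (intro mono_eqI) (simp_all add: P3_def)
    moreover have "\<not> lkp k VZ \<le> n"
    proof
      assume "lkp k VZ \<le> n"
      then have "lkp t (zm (lkp k VZ)) = 0" by (rule C)
      then show False using k(2) \<open>k = zm (lkp k VZ)\<close> by (simp add: in_keys_iff)
    qed
    ultimately show "\<exists>q. k = zm (Suc n) + q" by (simp add: zm_dvd_mono)
  qed
  define u where "u j = (if j = Suc n then - A else u' j + mon (mm n j) * Bq)" for j
  define c where "c j = (if j = n then C else c' j)" for j
  have "h j = Zp * u j - Yp * u (Suc j) + Xp * c j" if "j < Suc n" for j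
  proof (cases "j < n")
    case True
    have mono: "zm 1 + mm n j = ym 1 + mm n (Suc j)"
      using True by (intro mono_eqI) (simp_all add: lookup_add)
    have "Zp * mon (mm n j) = Yp * (mon (mm n (Suc j)) :: 'k mpoly3)"
      by (simp only: Zp_mon Yp_mon mon_add[symmetric] mono)
    then have "Zp * u j - Yp * u (Suc j) + Xp * c j = (Zp * u' j - Yp * u' (Suc j) + Xp * c' j) + (Zp * mon (mm n j) - Yp * mon (mm n (Suc j))) * Bq"
      using True by (simp add: u_def c_def algebra_simps)
    also have "\<dots> = h j" using uc True \<open>Zp * mon (mm n j) = Yp * mon (mm n (Suc j))\<close> by simp
    finally show ?thesis by simp
  next
    case False
    then have j: "j = n" using that by simp
    have "Zp * mon (zm n) = (mon (zm (Suc n)) :: 'k mpoly3)"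
      by (simp only: Zp_mon mon_add[symmetric] zm_add[symmetric] plus_1_eq_Suc)
    then have "Zp * u j - Yp * u (Suc j) + Xp * c j = Zp * u' n + (filt P3 t + filt P2 t + filt P1 t)"
      using j f1 f2 f3 by (simp add: u_def c_def mm_dd Xp_mon Yp_mon algebra_simps)
    also have "\<dots> = h n" using tdec by (simp add: t_def algebra_simps)
    finally show ?thesis using j by simp
  qed
  then show ?case by blast
qed

lemma S3:
  fixes g :: "nat \<Rightarrow> 'k::field mpoly3"
  assumes "\<forall>i\<le>n. rho (hb n g i) = 0"
  shows "\<forall>j<n. rho (g j) = 0"
proof (intro allI impI)
  fix j assume "j < n"
  then show "rho (g j) = 0"
  proof (induction j)
    case 0
    have "rho (hb n g 0) = 0" using assms by simp
    then have "Zp * rho (g 0) = 0" using 0 by (simp add: hb_def rho_uminus rho_Zp_mult)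
    then show ?case using Zp_nz[where 'k='k] mult_eq_0_iff by blast
  next
    case (Suc j)
    then have "rho (g j) = 0" by simp
    have "rho (hb n g (Suc j)) = 0" using assms Suc.prems by simp
    then have "Zp * rho (g (Suc j)) = 0" using Suc.prems \<open>rho (g j) = 0\<close>
      by (simp add: hb_def rho_diff rho_Zp_mult rho_Yp_mult)
    then show ?case using Zp_nz[where 'k='k] mult_eq_0_iff by blast
  qed
qed

lemma S4:
  fixes u :: "nat \<Rightarrow> 'k::field mpoly3"
  assumes "\<forall>j<n. rho (Zp * u j - Yp * u (Suc j)) = 0"
  shows "\<exists>t. \<forall>i\<le>n. rho (u i) = mon (mm n i) * t"
proof -
  define v where "v i = rho (u i)" for i
  have rel: "Zp * v j = Yp * v (Suc j)" if "j < n" for j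
    using assms that by (simp add: v_def rho_diff rho_Zp_mult rho_Yp_mult)
  have chain: "mon (zm j) * v 0 = mon (ym j) * v j" if "j \<le> n" for j
    using that
  proof (induction j)
    case 0
    then show ?case by simp
  next
    case (Suc j)
    have "mon (zm (Suc j)) * v 0 = Zp * (mon (zm j) * v 0)"
      by (simp only: Zp_mon mult.assoc[symmetric] mon_add[symmetric] zm_add[symmetric] plus_1_eq_Suc)
    also have "\<dots> = Zp * (mon (ym j) * v j)" using Suc by simp
    also have "\<dots> = mon (ym j) * (Zp * v j)" by (simp add: algebra_simps)
    also have "\<dots> = mon (ym j) * (Yp * v (Suc j))" using rel[of j] Suc.prems by simp
    also have "\<dots> = mon (ym (Suc j)) * v (Suc j)"
      by (simp only: Yp_mon mult.assoc[symmetric] mon_add[symmetric] ym_add[symmetric] add.commute[of j 1] plus_1_eq_Suc)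
    finally show ?case .
  qed
  have "vdiv VY n (mon (zm n) * v 0)"
    unfolding vdiv_iff using chain[of n] by (auto simp: ym_def)
  then have "vdiv VY n (v 0)" by (simp add: vdiv_mon_mult)
  then obtain t where t: "v 0 = mon (ym n) * t" unfolding vdiv_iff ym_def by blast
  have "v i = mon (mm n i) * t" if "i \<le> n" for i
  proof -
    have "mon (ym i) * v i = mon (zm i) * (mon (ym n) * t)" using chain[OF that] t by simp
    also have "\<dots> = mon (ym i) * (mon (mm n i) * t)"
    proof -
      have "zm i + ym n = ym i + mm n i" using that
        by (intro mono_eqI) (simp_all add: lookup_add)
      then show ?thesis by (simp only: mult.assoc[symmetric] mon_add[symmetric])
    qed
    finally show ?thesis using mon_nz[of "ym i", where 'k='k] by simp
  qed
  then show ?thesis unfolding v_def by blast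
qed


lemma Dsp_add: "w1 \<in> Dsp d \<Longrightarrow> w2 \<in> Dsp d \<Longrightarrow> (\<lambda>v. w1 v + w2 v) \<in> Dsp d"
  by (simp add: Dsp_def)
lemma Dsp_diff: "w1 \<in> Dsp d \<Longrightarrow> w2 \<in> Dsp d \<Longrightarrow> (\<lambda>v. w1 v - w2 v) \<in> Dsp d"
  by (simp add: Dsp_def)
lemma Dsp_scale: "w \<in> Dsp d \<Longrightarrow> (\<lambda>v. c * w v) \<in> Dsp d"
  by (simp add: Dsp_def)
lemma Dsp_sum: "finite I \<Longrightarrow> (\<And>i. i \<in> I \<Longrightarrow> w i \<in> Dsp d) \<Longrightarrow> (\<lambda>v. \<Sum>i\<in>I. c i * w i v) \<in> Dsp d"
  by (simp add: Dsp_def)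
lemma Sym_homog: "F \<in> Sym d \<longleftrightarrow> homog d F" by (simp add: Sym_def)

lemma homog_Xp: "homog 1 Xp" using homog_mon[of X1] by (simp add: Xp_mon)
lemma homog_Yp: "homog 1 Yp" using homog_mon[of "ym 1"] by (simp add: Yp_mon)
lemma homog_Zp: "homog 1 Zp" using homog_mon[of "zm 1"] by (simp add: Zp_mon)

lemma sum_Bidx: "(\<Sum>i\<in>Bidx n. f i) = (\<Sum>m\<in>M0 (n - 1). f (Inl m)) + (\<Sum>m\<in>M0 n. f (Inr m))"
  unfolding Bidx_def
  by (subst sum.union_disjoint) (auto simp: sum.reindex)

lemma finite_Bidx[simp]: "finite (Bidx n)" by (simp add: Bidx_def)

locale resol =
  fixes n :: nat and \<Phi> :: "'k::field dp"
  assumes npos: "n > 0"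
    and PhiD: "\<Phi> \<in> Dsp (2 * n - 1)"
    and bij: "bij_betw (pmap \<Phi>) (Sym (n - 1)) (Dsp (n - 1))"
begin

abbreviation P where "P \<equiv> pinv n \<Phi>"
abbreviation phi where "phi \<equiv> act Xp \<Phi>"

lemma pmap_eq: "pmap \<Phi> \<mu> = act \<mu> phi" by (simp add: pmap_def)

lemma P_props:
  assumes "w \<in> Dsp (n - 1)"
  shows "homog (n - 1) (P w)" and "act (P w) phi = w"
proof -
  have w: "w \<in> pmap \<Phi> ` Sym (n - 1)" using assms bij_betw_imp_surj_on[OF bij] by simp
  show "homog (n - 1) (P w)" using inv_into_into[OF w] by (simp add: pinv_def Sym_def)
  show "act (P w) phi = w" using f_inv_into_f[OF w] by (simp add: pinv_def pmap_def)
qed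

lemma P_pmap: "homog (n - 1) \<mu> \<Longrightarrow> P (act \<mu> phi) = \<mu>"
  using inv_into_f_f[OF bij_betw_imp_inj_on[OF bij], of \<mu>] by (simp add: pinv_def pmap_def Sym_def)

lemma pmap_Dsp: "homog (n - 1) \<mu> \<Longrightarrow> act \<mu> phi \<in> Dsp (n - 1)"
  using bij_betw_imp_surj_on[OF bij] by (auto simp: Sym_def pmap_def)

lemma P_add:
  assumes "w1 \<in> Dsp (n - 1)" "w2 \<in> Dsp (n - 1)"
  shows "P (\<lambda>v. w1 v + w2 v) = P w1 + P w2"
proof -
  have h: "homog (n - 1) (P w1 + P w2)" using P_props assms by (simp add: homog_add)
  have "act (P w1 + P w2) phi = (\<lambda>v. w1 v + w2 v)" using P_props assms by (simp add: act_add)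
  then show ?thesis using P_pmap[OF h] by simp
qed

lemma P_scale:
  assumes "w \<in> Dsp (n - 1)"
  shows "P (\<lambda>v. c * w v) = cst c * P w"
proof -
  have h: "homog (n - 1) (cst c * P w)" using P_props assms by (simp add: homog_cst_mult)
  have "act (cst c * P w) phi = (\<lambda>v. c * w v)" using P_props assms by (simp add: act_cst_mult)
  then show ?thesis using P_pmap[OF h] by simp
qed

lemma P_diff:
  assumes "w1 \<in> Dsp (n - 1)" "w2 \<in> Dsp (n - 1)"
  shows "P (\<lambda>v. w1 v - w2 v) = P w1 - P w2"
proof -
  have h: "homog (n - 1) (P w1 - P w2)" using P_props assms by (simp add: homog_diff)
  have "act (P w1 - P w2) phi = (\<lambda>v. w1 v - w2 v)" using P_props assms by (simp add: act_diff)
  then show ?thesis using P_pmap[OF h] by simp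
qed

lemma P_sum:
  assumes "finite I" "\<And>i. i \<in> I \<Longrightarrow> w i \<in> Dsp (n - 1)"
  shows "P (\<lambda>v. \<Sum>i\<in>I. c i * w i v) = (\<Sum>i\<in>I. cst (c i) * P (w i))"
proof -
  have h: "homog (n - 1) (\<Sum>i\<in>I. cst (c i) * P (w i))"
    using P_props assms by (intro homog_sum homog_cst_mult) auto
  have "act (\<Sum>i\<in>I. cst (c i) * P (w i)) phi = (\<lambda>v. \<Sum>i\<in>I. c i * w i v)"
    using P_props assms by (simp add: act_sum act_cst_mult)
  then show ?thesis using P_pmap[OF h] by simp
qed

lemma P_sym:
  assumes "w1 \<in> Dsp (n - 1)" "w2 \<in> Dsp (n - 1)"
  shows "pair (P w1) w2 = pair (P w2) w1"
proof -
  have "pair (P w1) w2 = act (P w1 * P w2) phi 0"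
    using P_props(2)[OF assms(2)] by (simp add: pair_def act_mult)
  also have "\<dots> = act (P w2 * P w1) phi 0" by (simp add: mult.commute)
  also have "\<dots> = pair (P w2) w1"
    using P_props(2)[OF assms(1)] by (simp add: pair_def act_mult)
  finally show ?thesis .
qed

lemma Phi_act_Dsp: "homog n F \<Longrightarrow> act F \<Phi> \<in> Dsp (n - 1)"
  using act_Dsp(1)[OF _ PhiD, of n F] npos by (simp add: diff_diff_add mult_2)

lemma dual_expand:
  assumes "w \<in> Dsp (n - 1)" "act Xp w = (\<lambda>_. 0)"
  shows "w = (\<lambda>v. \<Sum>m\<in>M0 (n - 1). w m * dual m v)"
proof
  fix v
  show "w v = (\<Sum>m\<in>M0 (n - 1). w m * dual m v)"
  proof (cases "v \<in> M0 (n - 1)")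
    case True
    have "(\<Sum>m\<in>M0 (n - 1). w m * dual m v) = (\<Sum>m\<in>M0 (n - 1). if m = v then w m else 0)"
      by (intro sum.cong) (auto simp: dual_def)
    then show ?thesis using True by (simp add: sum.delta')
  next
    case False
    have z: "(\<Sum>m\<in>M0 (n - 1). w m * dual m v) = 0"
      using False by (intro sum.neutral) (auto simp: dual_def)
    have "w v = 0"
    proof (cases "lkp v VX = 0")
      case True
      then have "mdeg v \<noteq> n - 1" using False by (simp add: M0_def)
      then show ?thesis using assms(1) by (simp add: Dsp_def)
    next
      case False
      then have "1 \<le> lkp v VX" by simp
      then obtain q where "v = X1 + q" by (simp only: X1_dvd_mono[symmetric]) blast
      then have "w v = act Xp w q" by (simp add: Xp_mon act_mon)
      then show ?thesis using assms(2) by simp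
    qed
    then show ?thesis using z by simp
  qed
qed

lemma G0:
  assumes "w \<in> Dsp (n - 1)" "act Xp w = (\<lambda>_. 0)"
  shows "(\<Sum>m\<in>M0 (n - 1). cst (w m) * P (dual m)) = P w"
proof -
  have "P w = P (\<lambda>v. \<Sum>m\<in>M0 (n - 1). w m * dual m v)" using dual_expand[OF assms] by simp
  also have "\<dots> = (\<Sum>m\<in>M0 (n - 1). cst (w m) * P (dual m))"
  proof (rule P_sum)
    fix m assume "m \<in> M0 (n - 1)"
    then show "dual m \<in> Dsp (n - 1)" using dual_Dsp[of m] M0_mdeg by fastforce
  qed simp
  finally show ?thesis by simp
qed

end


lemma lookup_sum_cst_mon:
  "finite A \<Longrightarrow> lkp (\<Sum>m\<in>A. cst (c m) * mon m :: 'k::comm_ring_1 mpoly3) k = (if k \<in> A then c k else 0)"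
proof -
  assume A: "finite A"
  have "lkp (\<Sum>m\<in>A. cst (c m) * mon m :: 'k mpoly3) k = (\<Sum>m\<in>A. lkp (cst (c m) * mon m :: 'k mpoly3) k)"
    by (simp add: lookup_sum)
  also have "\<dots> = (\<Sum>m\<in>A. if k = m then c m else 0)"
    by (intro sum.cong) (auto simp: lookup_mon)
  also have "\<dots> = (if k \<in> A then c k else 0)" using A by (simp add: sum.delta)
  finally show ?thesis .
qed

lemma sum_pick:
  assumes "finite A" "k \<in> A"
  shows "(\<Sum>m\<in>A. f m * cst (lkp (mon k :: 'k::comm_ring_1 mpoly3) m)) = (f k :: 'k mpoly3)"
proof -
  have "(\<Sum>m\<in>A. f m * cst (lkp (mon k :: 'k mpoly3) m)) = (\<Sum>m\<in>A. if m = k then f m else 0)"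
    by (intro sum.cong) (auto simp: lookup_mon)
  also have "\<dots> = f k" using assms by (simp add: sum.delta')
  finally show ?thesis .
qed

lemma pair_mult: "pair (a * c) w = pair a (act c w)"
  by (simp add: pair_def act_mult)

lemma pair_diff: "pair (A - B) w = pair A w - pair B w"
  by (simp add: pair_def act_diff)

lemma L_coef: "act (Yp * a - Zp * b) \<Phi> m1 = pair a (act (Yp * mon m1) \<Phi>) - pair b (act (Zp * mon m1) \<Phi>)"
proof -
  have "mon m1 * (Yp * a - Zp * b) = a * (Yp * mon m1) - b * (Zp * mon m1)"
    by (simp add: algebra_simps)
  then show ?thesis by (simp add: act_eval pair_diff pair_mult)
qed

lemma R_coef: "pair a (act Yp (dual m2)) - pair b (act Zp (dual m2)) = lkp (Yp * a - Zp * b) m2"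
proof -
  have "pair a (act Yp (dual m2)) = lkp (a * Yp) m2" by (simp add: pair_mult[symmetric] pair_dual)
  moreover have "pair b (act Zp (dual m2)) = lkp (b * Zp) m2" by (simp add: pair_mult[symmetric] pair_dual)
  ultimately show ?thesis by (simp add: lookup_minus mult.commute)
qed

lemma homog_M0: "m \<in> M0 d \<Longrightarrow> homog d (mon m)"
  using homog_mon[of m] M0_mdeg by fastforce

lemma zm1_M0: "m \<in> M0 d \<Longrightarrow> zm 1 + m \<in> M0 (Suc d)"
  by (simp add: M0_def lookup_add)
lemma ym1_M0: "m \<in> M0 d \<Longrightarrow> ym 1 + m \<in> M0 (Suc d)"
  by (simp add: M0_def lookup_add)

context resol begin

lemma n_Suc: "n = Suc (n - 1)" using npos by simp

lemma FS_decomp: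
  assumes "homog n F"
  shows "\<exists>G. homog (n - 1) G \<and> F = (\<Sum>m\<in>M0 n. cst (lkp F m) * mon m) + Xp * G"
proof -
  have r: "rho F = (\<Sum>m\<in>M0 n. cst (lkp F m) * mon m)"
  proof (rule poly_mapping_eqI)
    fix k
    show "lkp (rho F) k = lkp (\<Sum>m\<in>M0 n. cst (lkp F m) * mon m) k"
      unfolding lookup_sum_cst_mon[OF finite_M0]
    proof (cases "lkp k VX = 0")
      case True
      show "lkp (rho F) k = (if k \<in> M0 n then lkp F k else 0)"
      proof (cases "mdeg k = n")
        case True
        then show ?thesis using \<open>lkp k VX = 0\<close> by (simp add: rho_def lookup_filt M0_def)
      next
        case False
        then have "lkp F k = 0" using assms by (rule homog_lookup[rotated])
        then show ?thesis by (simp add: rho_def lookup_filt)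
      qed
    next
      case False
      then show "lkp (rho F) k = (if k \<in> M0 n then lkp F k else 0)"
        by (simp add: rho_def lookup_filt M0_def)
    qed
  qed
  obtain G0 where G0: "F = rho F + Xp * G0" using rho_decomp by blast
  have hr: "homog n (rho F)" unfolding homog_def
  proof
    fix m assume "m \<in> kys (rho F)"
    then have "m \<in> kys F" unfolding rho_def using keys_filt by blast
    then show "mdeg m = n" using assms by (simp add: homog_def)
  qed
  have "F = hc n F" using assms by (simp add: hc_homog)
  also have "\<dots> = hc n (rho F + Xp * G0)" using arg_cong[OF G0, of "hc n"] .
  also have "\<dots> = hc n (rho F) + hc n (Xp * G0)" by (rule hc_add)
  also have "\<dots> = rho F + Xp * hc (n - 1) G0"
    using hr npos by (simp add: hc_homog hc_homog_mult[OF homog_Xp])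
  finally have "F = (\<Sum>m\<in>M0 n. cst (lkp F m) * mon m) + Xp * hc (n - 1) G0" using r by simp
  then show ?thesis using homog_hc[of "n - 1" G0] by blast
qed

lemma G1:
  assumes hF: "homog n F" and cF: "act Xp (act F \<Phi>) = (\<lambda>_. 0)"
  shows "(\<Sum>m\<in>M0 (n - 1). b1 n \<Phi> (Inl m) * cst (act F \<Phi> m)) + (\<Sum>m\<in>M0 n. b1 n \<Phi> (Inr m) * cst (lkp F m)) = F"
proof -
  define psi where "psi = act F \<Phi>"
  have psiD: "psi \<in> Dsp (n - 1)" unfolding psi_def using Phi_act_Dsp[OF hF] .
  have s1: "(\<Sum>m\<in>M0 (n - 1). b1 n \<Phi> (Inl m) * cst (psi m)) = Xp * P psi"
  proof -
    have "(\<Sum>m\<in>M0 (n - 1). b1 n \<Phi> (Inl m) * cst (psi m)) = Xp * (\<Sum>m\<in>M0 (n - 1). cst (psi m) * P (dual m))"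
      by (simp add: sum_distrib_left algebra_simps)
    also have "\<dots> = Xp * P psi" using G0[OF psiD] cF by (simp add: psi_def)
    finally show ?thesis .
  qed
  obtain G where G: "homog (n - 1) G" "F = (\<Sum>m\<in>M0 n. cst (lkp F m) * mon m) + Xp * G"
    using FS_decomp[OF hF] by blast
  define FS where "FS = (\<Sum>m\<in>M0 n. cst (lkp F m) * mon m)"
  have hFS: "homog n FS" unfolding FS_def by (intro homog_sum homog_cst_mult homog_M0) auto
  have wD: "act (mon m) \<Phi> \<in> Dsp (n - 1)" if "m \<in> M0 n" for m
    using Phi_act_Dsp[OF homog_M0[OF that]] .
  have aFS: "act FS \<Phi> = (\<lambda>v. \<Sum>m\<in>M0 n. lkp F m * act (mon m) \<Phi> v)"
    unfolding FS_def by (simp add: act_sum act_cst_mult)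
  have s2: "(\<Sum>m\<in>M0 n. b1 n \<Phi> (Inr m) * cst (lkp F m)) = FS - Xp * P (act FS \<Phi>)"
  proof -
    have "(\<Sum>m\<in>M0 n. b1 n \<Phi> (Inr m) * cst (lkp F m)) = FS - Xp * (\<Sum>m\<in>M0 n. cst (lkp F m) * P (act (mon m) \<Phi>))"
      unfolding FS_def by (simp add: sum_distrib_left sum_subtractf algebra_simps)
    also have "(\<Sum>m\<in>M0 n. cst (lkp F m) * P (act (mon m) \<Phi>)) = P (act FS \<Phi>)"
      unfolding aFS
    proof (rule P_sum[symmetric])
      fix m assume "m \<in> M0 n"
      then show "act (mon m) \<Phi> \<in> Dsp (n - 1)" by (rule wD)
    qed simp
    finally show ?thesis .
  qed
  have FSD: "act FS \<Phi> \<in> Dsp (n - 1)" using Phi_act_Dsp[OF hFS] .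
  have psi_eq: "psi = (\<lambda>v. act FS \<Phi> v + act G phi v)"
    unfolding psi_def using G(2) by (simp add: FS_def[symmetric] act_add act_mult_rev)
  have "P psi = P (act FS \<Phi>) + G"
    unfolding psi_eq using P_add[OF FSD pmap_Dsp[OF G(1)]] P_pmap[OF G(1)] by simp
  then have "Xp * P psi + (FS - Xp * P (act FS \<Phi>)) = FS + Xp * G" by (simp add: algebra_simps)
  then show ?thesis using s1 s2 G(2) by (simp add: psi_def FS_def)
qed

end


context resol begin

lemma homog_P: "w \<in> Dsp (n - 1) \<Longrightarrow> homog n (Xp * P w)"
  using homog_mult[OF homog_Xp P_props(1)] npos by fastforce

lemma col_L:
  assumes m: "m \<in> M0 (n - 1)"
  shows "(\<Sum>i\<in>Bidx n. b1 n \<Phi> i * b2 n \<Phi> i (Inl m)) = 0"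
proof -
  define wa where "wa = act (Zp * mon m) \<Phi>"
  define wb where "wb = act (Yp * mon m) \<Phi>"
  define a where "a = P wa"
  define b where "b = P wb"
  define F where "F = Yp * a - Zp * b"
  have hm: "homog (n - 1) (mon m)" using homog_M0[OF m] .
  have hZm: "homog n (Zp * mon m)" using homog_mult[OF homog_Zp hm] npos by simp
  have hYm: "homog n (Yp * mon m)" using homog_mult[OF homog_Yp hm] npos by simp
  have waD: "wa \<in> Dsp (n - 1)" unfolding wa_def by (rule Phi_act_Dsp[OF hZm])
  have wbD: "wb \<in> Dsp (n - 1)" unfolding wb_def by (rule Phi_act_Dsp[OF hYm])
  have ha: "homog (n - 1) a" unfolding a_def using P_props(1)[OF waD] .
  have hb: "homog (n - 1) b" unfolding b_def using P_props(1)[OF wbD] .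
  have hF: "homog n F" unfolding F_def
    using homog_diff[OF homog_mult[OF homog_Yp ha] homog_mult[OF homog_Zp hb]] npos by simp
  have cF: "act Xp (act F \<Phi>) = (\<lambda>_. 0)"
  proof -
    have "act Xp (act F \<Phi>) = act F phi" by (rule act_comm)
    also have "\<dots> = (\<lambda>v. act Yp (act a phi) v - act Zp (act b phi) v)"
      unfolding F_def by (simp add: act_diff act_mult)
    also have "\<dots> = (\<lambda>v. act Yp wa v - act Zp wb v)"
      using P_props(2)[OF waD] P_props(2)[OF wbD] by (simp add: a_def b_def)
    also have "\<dots> = (\<lambda>_. 0)"
      unfolding wa_def wb_def by (simp add: act_mult[symmetric] algebra_simps)
    finally show ?thesis .
  qed
  have e1: "b2 n \<Phi> (Inl m1) (Inl m) = Xp * cst (act F \<Phi> m1)" for m1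
    by (simp add: F_def L_coef a_def b_def wa_def wb_def)
  have e2: "b2 n \<Phi> (Inr m2) (Inl m) = Xp * cst (lkp F m2) + Yp * cst (lkp (mon (zm 1 + m) :: 'k mpoly3) m2) - Zp * cst (lkp (mon (ym 1 + m) :: 'k mpoly3) m2)" for m2
  proof -
    have "pair a (act Yp (dual m2)) - pair b (act Zp (dual m2)) = lkp F m2"
      unfolding F_def by (rule R_coef)
    then show ?thesis by (simp add: a_def b_def wa_def wb_def Zp_mon Yp_mon mon_add)
  qed
  have zM: "zm 1 + m \<in> M0 n" using zm1_M0[OF m] npos by simp
  have yM: "ym 1 + m \<in> M0 n" using ym1_M0[OF m] npos by simp
  have pz: "(\<Sum>m2\<in>M0 n. b1 n \<Phi> (Inr m2) * cst (lkp (mon (zm 1 + m) :: 'k mpoly3) m2)) = b1 n \<Phi> (Inr (zm 1 + m))"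
    by (rule sum_pick[OF finite_M0 zM])
  have py: "(\<Sum>m2\<in>M0 n. b1 n \<Phi> (Inr m2) * cst (lkp (mon (ym 1 + m) :: 'k mpoly3) m2)) = b1 n \<Phi> (Inr (ym 1 + m))"
    by (rule sum_pick[OF finite_M0 yM])
  have "(\<Sum>i\<in>Bidx n. b1 n \<Phi> i * b2 n \<Phi> i (Inl m)) =
        Xp * ((\<Sum>m1\<in>M0 (n - 1). b1 n \<Phi> (Inl m1) * cst (act F \<Phi> m1)) + (\<Sum>m2\<in>M0 n. b1 n \<Phi> (Inr m2) * cst (lkp F m2)))
        + Yp * (\<Sum>m2\<in>M0 n. b1 n \<Phi> (Inr m2) * cst (lkp (mon (zm 1 + m) :: 'k mpoly3) m2))
        - Zp * (\<Sum>m2\<in>M0 n. b1 n \<Phi> (Inr m2) * cst (lkp (mon (ym 1 + m) :: 'k mpoly3) m2))"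
    unfolding sum_Bidx e1 e2
    by (simp add: sum_distrib_left sum.distrib sum_subtractf algebra_simps)
  also have "\<dots> = Xp * F + Yp * b1 n \<Phi> (Inr (zm 1 + m)) - Zp * b1 n \<Phi> (Inr (ym 1 + m))"
    unfolding pz py G1[OF hF cF] ..
  also have "\<dots> = 0"
    by (simp add: F_def a_def b_def wa_def wb_def Zp_mon Yp_mon mon_add algebra_simps)
  finally show ?thesis .
qed

lemma col_R:
  assumes m: "m \<in> M0 n"
  shows "(\<Sum>i\<in>Bidx n. b1 n \<Phi> i * b2 n \<Phi> i (Inr m)) = 0"
proof -
  define wa :: "'k dp" where "wa = act Zp (dual m)"
  define wb :: "'k dp" where "wb = act Yp (dual m)"
  define a where "a = P wa"
  define b where "b = P wb"
  define F where "F = Yp * a - Zp * b"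
  have dm: "dual m \<in> Dsp n" using dual_Dsp[of m] M0_mdeg[OF m] by simp
  have waD: "wa \<in> Dsp (n - 1)" unfolding wa_def by (rule act_Dsp(1)[OF homog_Zp dm])
  have wbD: "wb \<in> Dsp (n - 1)" unfolding wb_def by (rule act_Dsp(1)[OF homog_Yp dm])
  have xm: "act Xp (dual m) = (\<lambda>_. 0)" using act_X_dual_M0 M0_X[OF m] by blast
  have waX: "act Xp wa = (\<lambda>_. 0)" unfolding wa_def by (simp add: act_comm[of Xp] xm)
  have wbX: "act Xp wb = (\<lambda>_. 0)" unfolding wb_def by (simp add: act_comm[of Xp] xm)
  have ha: "homog (n - 1) a" unfolding a_def using P_props(1)[OF waD] .
  have hb: "homog (n - 1) b" unfolding b_def using P_props(1)[OF wbD] .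
  have hF: "homog n F" unfolding F_def
    using homog_diff[OF homog_mult[OF homog_Yp ha] homog_mult[OF homog_Zp hb]] npos by simp
  have cF: "act Xp (act F \<Phi>) = (\<lambda>_. 0)"
  proof -
    have "act Xp (act F \<Phi>) = act F phi" by (rule act_comm)
    also have "\<dots> = (\<lambda>v. act Yp (act a phi) v - act Zp (act b phi) v)"
      unfolding F_def by (simp add: act_diff act_mult)
    also have "\<dots> = (\<lambda>v. act Yp wa v - act Zp wb v)"
      using P_props(2)[OF waD] P_props(2)[OF wbD] by (simp add: a_def b_def)
    also have "\<dots> = (\<lambda>_. 0)"
      unfolding wa_def wb_def by (simp add: act_comm[of Yp])
    finally show ?thesis .
  qed
  have e1: "b2 n \<Phi> (Inl m1) (Inr m) = Xp * cst (act F \<Phi> m1) - Yp * cst (wa m1) + Zp * cst (wb m1)" if m1: "m1 \<in> M0 (n - 1)" for m1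
  proof -
    have hm1: "homog (n - 1) (mon m1)" using homog_M0[OF m1] .
    have hZm: "homog n (Zp * mon m1)" using homog_mult[OF homog_Zp hm1] npos by simp
    have hYm: "homog n (Yp * mon m1)" using homog_mult[OF homog_Yp hm1] npos by simp
    have s1: "pair (P (act (Zp * mon m1) \<Phi>)) wb = pair b (act (Zp * mon m1) \<Phi>)"
      unfolding b_def by (rule P_sym[OF Phi_act_Dsp[OF hZm] wbD])
    have s2: "pair (P (act (Yp * mon m1) \<Phi>)) wa = pair a (act (Yp * mon m1) \<Phi>)"
      unfolding a_def by (rule P_sym[OF Phi_act_Dsp[OF hYm] waD])
    have "- pair (P (act (Zp * mon m1) \<Phi>)) wb + pair (P (act (Yp * mon m1) \<Phi>)) wa = act F \<Phi> m1"
      unfolding s1 s2 F_def L_coef by simp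
    then show ?thesis by (simp add: wa_def wb_def)
  qed
  have e2: "b2 n \<Phi> (Inr m2) (Inr m) = Xp * cst (lkp F m2)" for m2
  proof -
    have "pair a (act Yp (dual m2)) - pair b (act Zp (dual m2)) = lkp F m2"
      unfolding F_def by (rule R_coef)
    then show ?thesis by (simp add: a_def b_def wa_def wb_def)
  qed
  have g0a: "(\<Sum>m1\<in>M0 (n - 1). b1 n \<Phi> (Inl m1) * cst (wa m1)) = Xp * a"
  proof -
    have "(\<Sum>m1\<in>M0 (n - 1). b1 n \<Phi> (Inl m1) * cst (wa m1)) = Xp * (\<Sum>m1\<in>M0 (n - 1). cst (wa m1) * P (dual m1))"
      by (simp add: sum_distrib_left algebra_simps)
    then show ?thesis using G0[OF waD waX] by (simp add: a_def)
  qed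
  have g0b: "(\<Sum>m1\<in>M0 (n - 1). b1 n \<Phi> (Inl m1) * cst (wb m1)) = Xp * b"
  proof -
    have "(\<Sum>m1\<in>M0 (n - 1). b1 n \<Phi> (Inl m1) * cst (wb m1)) = Xp * (\<Sum>m1\<in>M0 (n - 1). cst (wb m1) * P (dual m1))"
      by (simp add: sum_distrib_left algebra_simps)
    then show ?thesis using G0[OF wbD wbX] by (simp add: b_def)
  qed
  have "(\<Sum>i\<in>Bidx n. b1 n \<Phi> i * b2 n \<Phi> i (Inr m)) =
        (\<Sum>m1\<in>M0 (n - 1). b1 n \<Phi> (Inl m1) * (Xp * cst (act F \<Phi> m1) - Yp * cst (wa m1) + Zp * cst (wb m1)))
        + (\<Sum>m2\<in>M0 n. b1 n \<Phi> (Inr m2) * (Xp * cst (lkp F m2)))"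
  proof -
    have "(\<Sum>m1\<in>M0 (n - 1). b1 n \<Phi> (Inl m1) * b2 n \<Phi> (Inl m1) (Inr m)) =
          (\<Sum>m1\<in>M0 (n - 1). b1 n \<Phi> (Inl m1) * (Xp * cst (act F \<Phi> m1) - Yp * cst (wa m1) + Zp * cst (wb m1)))"
      by (intro sum.cong refl) (simp only: e1)
    then show ?thesis unfolding sum_Bidx e2 by simp
  qed
  also have "\<dots> = Xp * ((\<Sum>m1\<in>M0 (n - 1). b1 n \<Phi> (Inl m1) * cst (act F \<Phi> m1)) + (\<Sum>m2\<in>M0 n. b1 n \<Phi> (Inr m2) * cst (lkp F m2)))
        - Yp * (\<Sum>m1\<in>M0 (n - 1). b1 n \<Phi> (Inl m1) * cst (wa m1))
        + Zp * (\<Sum>m1\<in>M0 (n - 1). b1 n \<Phi> (Inl m1) * cst (wb m1))"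
    by (simp add: sum_distrib_left sum.distrib sum_subtractf algebra_simps)
  also have "\<dots> = Xp * F - Yp * (Xp * a) + Zp * (Xp * b)"
    unfolding g0a g0b G1[OF hF cF] ..
  also have "\<dots> = 0" by (simp add: F_def algebra_simps)
  finally show ?thesis .
qed

lemma complex12:
  assumes "j \<in> Bidx n"
  shows "(\<Sum>i\<in>Bidx n. b1 n \<Phi> i * b2 n \<Phi> i j) = 0"
proof -
  from assms consider (L) m where "m \<in> M0 (n - 1)" "j = Inl m" | (R) m where "m \<in> M0 n" "j = Inr m"
    unfolding Bidx_def by blast
  then show ?thesis
  proof cases
    case L then show ?thesis using col_L by simp
  next
    case R then show ?thesis using col_R by simp
  qed
qed

end


lemma act_dual_eval: "act c (dual m2) m = lkp (mon m * c) m2"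
  by (simp add: act_eval pair_dual)

lemma homog_var_cst: "homog 1 V \<Longrightarrow> homog 1 (V * cst c)"
proof -
  assume "homog 1 V"
  then have "homog (1 + 0) (V * cst c)" by (rule homog_mult[OF _ homog_cst])
  then show ?thesis by simp
qed

lemma b3_b1: "b3 n \<Phi> j = b1 n \<Phi> j"
  by (cases j) simp_all

context resol begin

lemma skew:
  assumes i: "i \<in> Bidx n" and j: "j \<in> Bidx n"
  shows "b2 n \<Phi> i j = - b2 n \<Phi> j i"
proof -
  have hM1: "homog n (Zp * mon m)" "homog n (Yp * mon m)" if "m \<in> M0 (n - 1)" for m
    using homog_mult[OF homog_Zp homog_M0[OF that]] homog_mult[OF homog_Yp homog_M0[OF that]] npos by simp_all
  have D1: "act (Zp * mon m) \<Phi> \<in> Dsp (n - 1)" "act (Yp * mon m) \<Phi> \<in> Dsp (n - 1)" if "m \<in> M0 (n - 1)" for m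
    using Phi_act_Dsp[OF hM1(1)[OF that]] Phi_act_Dsp[OF hM1(2)[OF that]] by simp_all
  have D2: "act Zp (dual m) \<in> Dsp (n - 1)" "act Yp (dual m) \<in> Dsp (n - 1)" if "m \<in> M0 n" for m
  proof -
    have dm: "dual m \<in> Dsp n" using dual_Dsp[of m] M0_mdeg[OF that] by simp
    show "act Zp (dual m) \<in> Dsp (n - 1)" by (rule act_Dsp(1)[OF homog_Zp dm])
    show "act Yp (dual m) \<in> Dsp (n - 1)" by (rule act_Dsp(1)[OF homog_Yp dm])
  qed
  from i consider (L) m1 where "m1 \<in> M0 (n - 1)" "i = Inl m1" | (R) m1 where "m1 \<in> M0 n" "i = Inr m1"
    unfolding Bidx_def by blast
  then show ?thesis
  proof cases
    case L
    from j consider (L') m where "m \<in> M0 (n - 1)" "j = Inl m" | (R') m where "m \<in> M0 n" "j = Inr m"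
      unfolding Bidx_def by blast
    then show ?thesis
    proof cases
      case L'
      have s1: "pair (P (act (Zp * mon m1) \<Phi>)) (act (Yp * mon m) \<Phi>) = pair (P (act (Yp * mon m) \<Phi>)) (act (Zp * mon m1) \<Phi>)"
        by (rule P_sym[OF D1(1)[OF L(1)] D1(2)[OF L'(1)]])
      have s2: "pair (P (act (Yp * mon m1) \<Phi>)) (act (Zp * mon m) \<Phi>) = pair (P (act (Zp * mon m) \<Phi>)) (act (Yp * mon m1) \<Phi>)"
        by (rule P_sym[OF D1(2)[OF L(1)] D1(1)[OF L'(1)]])
      show ?thesis using L L' by (simp add: s1 s2 cst_diff algebra_simps)
    next
      case R'
      show ?thesis using L R' by (simp add: act_dual_eval cst_diff cst_uminus algebra_simps)
    qed
  next
    case R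
    from j consider (L') m where "m \<in> M0 (n - 1)" "j = Inl m" | (R') m where "m \<in> M0 n" "j = Inr m"
      unfolding Bidx_def by blast
    then show ?thesis
    proof cases
      case L'
      show ?thesis using R L' by (simp add: act_dual_eval cst_diff cst_uminus algebra_simps)
    next
      case R'
      have s1: "pair (P (act Zp (dual m1))) (act Yp (dual m)) = pair (P (act Yp (dual m))) (act Zp (dual m1))"
        by (rule P_sym[OF D2(1)[OF R(1)] D2(2)[OF R'(1)]])
      have s2: "pair (P (act Yp (dual m1))) (act Zp (dual m)) = pair (P (act Zp (dual m))) (act Yp (dual m1))"
        by (rule P_sym[OF D2(2)[OF R(1)] D2(1)[OF R'(1)]])
      show ?thesis using R R' by (simp add: s1 s2 cst_diff algebra_simps)
    qed
  qed
qed

lemma complex23: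
  assumes "i \<in> Bidx n"
  shows "(\<Sum>j\<in>Bidx n. b2 n \<Phi> i j * b3 n \<Phi> j) = 0"
proof -
  have "(\<Sum>j\<in>Bidx n. b2 n \<Phi> i j * b3 n \<Phi> j) = (\<Sum>j\<in>Bidx n. - (b1 n \<Phi> j * b2 n \<Phi> j i))"
    by (intro sum.cong refl) (simp add: b3_b1 skew[OF assms] mult.commute)
  also have "\<dots> = - (\<Sum>j\<in>Bidx n. b1 n \<Phi> j * b2 n \<Phi> j i)" by (simp add: sum_negf)
  also have "\<dots> = 0" using complex12[OF assms] by simp
  finally show ?thesis .
qed

lemma homog_b1: "j \<in> Bidx n \<Longrightarrow> homog n (b1 n \<Phi> j)"
proof -
  assume "j \<in> Bidx n"
  then consider (L) m where "m \<in> M0 (n - 1)" "j = Inl m" | (R) m where "m \<in> M0 n" "j = Inr m"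
    unfolding Bidx_def by blast
  then show ?thesis
  proof cases
    case L
    have "dual m \<in> Dsp (n - 1)" using dual_Dsp[of m] M0_mdeg[OF L(1)] by simp
    then show ?thesis using L homog_P by simp
  next
    case R
    have "act (mon m) \<Phi> \<in> Dsp (n - 1)" using Phi_act_Dsp[OF homog_M0[OF R(1)]] .
    have "homog n (mon m - Xp * P (act (mon m) \<Phi>))" by (rule homog_diff[OF homog_M0[OF R(1)] homog_P]) fact
    then show ?thesis using R by simp
  qed
qed

lemma homog_b2: "homog 1 (b2 n \<Phi> i j)"
  by (cases i; cases j; simp only: b2.simps; (rule homog_add homog_diff homog_var_cst homog_Xp homog_Yp homog_Zp)+)

lemma lkp0: "homog d F \<Longrightarrow> 0 < d \<Longrightarrow> lkp F 0 = 0"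
  by (rule homog_lookup) auto

end


lemma dual_expand_gen:
  assumes "w \<in> Dsp e" "act Xp w = (\<lambda>_. 0)"
  shows "w = (\<lambda>v. \<Sum>m\<in>M0 e. w m * dual m v)"
proof
  fix v
  show "w v = (\<Sum>m\<in>M0 e. w m * dual m v)"
  proof (cases "v \<in> M0 e")
    case True
    have "(\<Sum>m\<in>M0 e. w m * dual m v) = (\<Sum>m\<in>M0 e. if m = v then w m else 0)"
      by (intro sum.cong) (auto simp: dual_def)
    then show ?thesis using True by (simp add: sum.delta')
  next
    case False
    have z: "(\<Sum>m\<in>M0 e. w m * dual m v) = 0"
      using False by (intro sum.neutral) (auto simp: dual_def)
    have "w v = 0"
    proof (cases "lkp v VX = 0")
      case True
      then have "mdeg v \<noteq> e" using False by (simp add: M0_def)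
      then show ?thesis using assms(1) by (simp add: Dsp_def)
    next
      case False
      then have "1 \<le> lkp v VX" by simp
      then obtain q where "v = X1 + q" by (simp only: X1_dvd_mono[symmetric]) blast
      then have "w v = act Xp w q" by (simp add: Xp_mon act_mon)
      then show ?thesis using assms(2) by simp
    qed
    then show ?thesis using z by simp
  qed
qed

lemma S0:
  fixes F :: "'k::comm_ring_1 mpoly3"
  assumes "\<forall>k\<in>kys F. n \<le> lkp k VY + lkp k VZ"
  shows "\<exists>s. F = (\<Sum>i\<le>n. mon (mm n i) * s i)"
proof -
  define Q where "Q i k = (min (lkp k VZ) n = i)" for i k
  have dec: "F = (\<Sum>i\<le>n. filt (Q i) F)"
  proof (rule poly_mapping_eqI)
    fix k
    have "lkp (\<Sum>i\<le>n. filt (Q i) F) k = (\<Sum>i\<le>n. if min (lkp k VZ) n = i then lkp F k else 0)"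
      by (simp add: lookup_sum lookup_filt Q_def)
    also have "\<dots> = lkp F k" by (simp add: sum.delta)
    finally show "lkp F k = lkp (\<Sum>i\<le>n. filt (Q i) F) k" by simp
  qed
  have "\<forall>i. \<exists>s. i \<le> n \<longrightarrow> filt (Q i) F = mon (mm n i) * s"
  proof (intro allI)
    fix i
    show "\<exists>s. i \<le> n \<longrightarrow> filt (Q i) F = mon (mm n i) * s"
    proof (cases "i \<le> n")
      case True
      have "\<exists>q. k = mm n i + q" if "k \<in> kys (filt (Q i) F)" for k
      proof -
        have k: "Q i k" "k \<in> kys F" using keys_filt[OF that] by auto
        have "n \<le> lkp k VY + lkp k VZ" using assms k(2) by blast
        then have "\<forall>v. lkp (mm n i) v \<le> lkp k v" using k(1) unfolding var3_all
          by (auto simp: Q_def min_def split: if_splits)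
        with mono_dvd_iff[of k "mm n i"] show ?thesis by (rule iffD2)
      qed
      then obtain s where "filt (Q i) F = mon (mm n i) * s" by (rule mon_dvd_keysE)
      then show ?thesis by blast
    qed simp
  qed
  then obtain s where s: "\<forall>i. i \<le> n \<longrightarrow> filt (Q i) F = mon (mm n i) * s i" by (rule choice[THEN exE])
  have "(\<Sum>i\<le>n. filt (Q i) F) = (\<Sum>i\<le>n. mon (mm n i) * s i)"
    using s by (intro sum.cong refl) simp
  then have "F = (\<Sum>i\<le>n. mon (mm n i) * s i)" using dec by simp
  then show ?thesis by blast
qed

context resol begin

lemma phi_Dsp: "phi \<in> Dsp (2 * n - 2)"
  using act_Dsp(1)[OF homog_Xp PhiD] by (simp add: diff_diff_add numeral_2_eq_2)

lemma act_hc: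
  assumes w: "w \<in> Dsp N"
  shows "act (hc d \<mu>) w v = (if d + mdeg v = N then act \<mu> w v else 0)"
proof -
  have ks: "kys (hc d \<mu>) \<subseteq> kys \<mu>" unfolding hc_def using keys_filt by blast
  have "act (hc d \<mu>) w v = (\<Sum>u\<in>kys \<mu>. lkp (hc d \<mu>) u * w (u + v))"
    by (rule act_superset[OF finite_keys ks])
  also have "\<dots> = (\<Sum>u\<in>kys \<mu>. (if mdeg u = d then lkp \<mu> u else 0) * w (u + v))"
    by (simp add: lookup_hc)
  also have "\<dots> = (if d + mdeg v = N then act \<mu> w v else 0)"
  proof (cases "d + mdeg v = N")
    case True
    have "(\<Sum>u\<in>kys \<mu>. (if mdeg u = d then lkp \<mu> u else 0) * w (u + v)) = (\<Sum>u\<in>kys \<mu>. lkp \<mu> u * w (u + v))"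
    proof (intro sum.cong refl)
      fix u
      show "(if mdeg u = d then lkp \<mu> u else 0) * w (u + v) = lkp \<mu> u * w (u + v)"
      proof (cases "mdeg u = d")
        case False
        then have "mdeg (u + v) \<noteq> N" using True by simp
        then show ?thesis using w by (simp add: Dsp_def)
      qed simp
    qed
    then show ?thesis using True by (simp add: act_def)
  next
    case False
    have "(\<Sum>u\<in>kys \<mu>. (if mdeg u = d then lkp \<mu> u else 0) * w (u + v)) = 0"
    proof (intro sum.neutral ballI)
      fix u
      show "(if mdeg u = d then lkp \<mu> u else 0) * w (u + v) = 0"
      proof (cases "mdeg u = d")
        case True
        then have "mdeg (u + v) \<noteq> N" using False by simp
        then show ?thesis using w by (simp add: Dsp_def)
      qed simp
    qed
    then show ?thesis using False by simp
  qed
  finally show ?thesis .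
qed

lemma Iid_hc: "act \<mu> phi = (\<lambda>_. 0) \<Longrightarrow> act (hc d \<mu>) phi = (\<lambda>_. 0)"
  by (rule ext) (simp add: act_hc[OF phi_Dsp])

definition JJ where "JJ = beta1 n \<Phi> ` Fmod n"

lemma JJ_zero: "0 \<in> JJ"
proof -
  have m: "(\<lambda>_. 0) \<in> (Fmod n :: (bidx \<Rightarrow> 'k mpoly3) set)" by (simp add: Fmod_def)
  have e: "beta1 n \<Phi> (\<lambda>_. 0) = 0" by (simp add: beta1_def)
  show ?thesis unfolding JJ_def by (rule rev_image_eqI[where f="beta1 n \<Phi>", OF m e[symmetric]])
qed

lemma JJ_add: "a \<in> JJ \<Longrightarrow> b \<in> JJ \<Longrightarrow> a + b \<in> JJ"
proof -
  assume "a \<in> JJ" "b \<in> JJ"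
  then obtain f g where f: "f \<in> Fmod n" "a = beta1 n \<Phi> f" and g: "g \<in> Fmod n" "b = beta1 n \<Phi> g"
    unfolding JJ_def by blast
  have m: "(\<lambda>i. f i + g i) \<in> Fmod n" using f g by (simp add: Fmod_def)
  have e: "beta1 n \<Phi> (\<lambda>i. f i + g i) = a + b"
    using f g by (simp add: beta1_def distrib_left sum.distrib)
  show ?thesis unfolding JJ_def by (rule rev_image_eqI[where f="beta1 n \<Phi>", OF m e[symmetric]])
qed

lemma JJ_mult: "a \<in> JJ \<Longrightarrow> r * a \<in> JJ"
proof -
  assume "a \<in> JJ"
  then obtain f where f: "f \<in> Fmod n" "a = beta1 n \<Phi> f" unfolding JJ_def by blast
  have m: "(\<lambda>i. r * f i) \<in> Fmod n" using f by (simp add: Fmod_def)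
  have e: "beta1 n \<Phi> (\<lambda>i. r * f i) = r * a"
    using f by (simp add: beta1_def sum_distrib_left algebra_simps)
  show ?thesis unfolding JJ_def by (rule rev_image_eqI[where f="beta1 n \<Phi>", OF m e[symmetric]])
qed

lemma JJ_gen: "j \<in> Bidx n \<Longrightarrow> b1 n \<Phi> j * c \<in> JJ"
proof -
  assume j: "j \<in> Bidx n"
  have m: "(\<lambda>i. if i = j then c else 0) \<in> Fmod n" using j by (simp add: Fmod_def)
  have e: "beta1 n \<Phi> (\<lambda>i. if i = j then c else 0) = b1 n \<Phi> j * c"
  proof -
    have "beta1 n \<Phi> (\<lambda>i. if i = j then c else 0) = (\<Sum>i\<in>Bidx n. if i = j then b1 n \<Phi> i * c else 0)"
      unfolding beta1_def by (intro sum.cong) auto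
    then show ?thesis using j by (simp add: sum.delta')
  qed
  show ?thesis unfolding JJ_def by (rule rev_image_eqI[where f="beta1 n \<Phi>", OF m e[symmetric]])
qed

lemma JJ_sum: "finite I \<Longrightarrow> (\<And>i. i \<in> I \<Longrightarrow> a i \<in> JJ) \<Longrightarrow> (\<Sum>i\<in>I. a i) \<in> JJ"
  by (induction I rule: finite_induct) (simp_all add: JJ_zero JJ_add)

lemma JJ_diff: "a \<in> JJ \<Longrightarrow> b \<in> JJ \<Longrightarrow> a - b \<in> JJ"
  using JJ_add[of a "(- 1) * b"] JJ_mult[of b "- 1"] by simp

lemma b1_I: "j \<in> Bidx n \<Longrightarrow> act (b1 n \<Phi> j) phi = (\<lambda>_. 0)"
proof -
  assume "j \<in> Bidx n"
  then consider (L) m where "m \<in> M0 (n - 1)" "j = Inl m" | (R) m where "m \<in> M0 n" "j = Inr m"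
    unfolding Bidx_def by blast
  then show ?thesis
  proof cases
    case L
    have "dual m \<in> Dsp (n - 1)" using dual_Dsp[of m] M0_mdeg[OF L(1)] by simp
    then have pd: "act (P (dual m)) phi = dual m" by (rule P_props(2))
    have "act (b1 n \<Phi> j) phi = act Xp (dual m)" using L by (simp add: act_mult pd)
    then show ?thesis using act_X_dual_M0 M0_X[OF L(1)] by simp
  next
    case R
    have wD: "act (mon m) \<Phi> \<in> Dsp (n - 1)" using Phi_act_Dsp[OF homog_M0[OF R(1)]] .
    have "act (b1 n \<Phi> j) phi = (\<lambda>v. act (mon m) phi v - act Xp (act (mon m) \<Phi>) v)"
      using R by (simp add: act_diff act_mult P_props(2)[OF wD])
    then show ?thesis by (simp add: act_comm[of "mon m"])
  qed
qed

lemma beta1_I: "f \<in> Fmod n \<Longrightarrow> act (beta1 n \<Phi> f) phi = (\<lambda>_. 0)"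
  by (simp add: beta1_def act_sum act_mult_rev[of "b1 n \<Phi> _"] b1_I)

end


context resol begin

lemma JJ_I: "a \<in> JJ \<Longrightarrow> act a phi = (\<lambda>_. 0)"
  unfolding JJ_def using beta1_I by blast

lemma P_zero: "P (\<lambda>_. 0) = 0"
  using P_pmap[of 0] by simp

lemma I_low:
  assumes h: "homog d \<mu>" and dn: "d < n" and I: "act \<mu> phi = (\<lambda>_. 0)"
  shows "\<mu> = 0"
proof -
  define t :: "'k mpoly3" where "t = mon (ym (n - 1 - d))"
  have ht: "homog (n - 1 - d) t" unfolding t_def using homog_mon[of "ym (n - 1 - d)"] by simp
  have hmt: "homog (n - 1) (\<mu> * t)" using homog_mult[OF h ht] dn by simp
  have "act (\<mu> * t) phi = (\<lambda>_. 0)" by (simp add: act_mult_rev[of \<mu>] I)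
  then have "\<mu> * t = 0" using P_pmap[OF hmt] P_zero by simp
  moreover have "t \<noteq> 0" unfolding t_def by (rule mon_nz)
  ultimately show ?thesis by simp
qed

lemma I_sub_J_homog:
  assumes "homog d \<mu>" "act \<mu> phi = (\<lambda>_. 0)"
  shows "\<mu> \<in> JJ"
  using assms
proof (induction d arbitrary: \<mu> rule: less_induct)
  case (less d)
  note hmu = less.prems(1) and Imu = less.prems(2)
  show ?case
  proof (cases "d < n")
    case True
    then have "\<mu> = 0" using I_low hmu Imu by blast
    then show ?thesis using JJ_zero by simp
  next
    case False
    then have dn: "n \<le> d" by simp
    have "\<forall>k\<in>kys (rho \<mu>). n \<le> lkp k VY + lkp k VZ"
    proof
      fix k assume "k \<in> kys (rho \<mu>)"
      then have "lkp k VX = 0" "k \<in> kys \<mu>" unfolding rho_def using keys_filt by blast+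
      then have "mdeg k = d" "lkp k VX = 0" using hmu by (auto simp: homog_def)
      then show "n \<le> lkp k VY + lkp k VZ" using dn by (simp add: mdeg_def)
    qed
    then obtain s where s: "rho \<mu> = (\<Sum>i\<le>n. mon (mm n i) * s i)" using S0 by blast
    obtain G0 where G0: "\<mu> = rho \<mu> + Xp * G0" using rho_decomp by blast
    define w where "w i = act (mon (mm n i)) \<Phi>" for i
    define B where "B = (\<Sum>i\<le>n. b1 n \<Phi> (Inr (mm n i)) * hc (d - n) (s i))"
    define \<nu> where "\<nu> = hc (d - 1) (G0 + (\<Sum>i\<le>n. P (w i) * s i))"
    have BJ: "B \<in> JJ" unfolding B_def
      by (intro JJ_sum JJ_gen) (auto simp: Bidx_def mm_in_M0)
    have hb1: "homog n (b1 n \<Phi> (Inr (mm n i)))" if "i \<le> n" for i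
      by (rule homog_b1) (simp add: Bidx_def mm_in_M0 that)
    have e0: "\<mu> - (\<Sum>i\<le>n. b1 n \<Phi> (Inr (mm n i)) * s i) = Xp * (G0 + (\<Sum>i\<le>n. P (w i) * s i))"
    proof -
      have "(\<Sum>i\<le>n. b1 n \<Phi> (Inr (mm n i)) * s i) = (\<Sum>i\<le>n. mon (mm n i) * s i) - Xp * (\<Sum>i\<le>n. P (w i) * s i)"
        by (simp add: w_def sum_subtractf sum_distrib_left algebra_simps)
      then show ?thesis using G0 s by (simp add: algebra_simps)
    qed
    have eB: "hc d (\<Sum>i\<le>n. b1 n \<Phi> (Inr (mm n i)) * s i) = B"
      unfolding B_def hc_sum[OF finite_atMost]
    proof (intro sum.cong refl)
      fix i assume "i \<in> {..n}"
      then have i: "i \<le> n" by simp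
      show "hc d (b1 n \<Phi> (Inr (mm n i)) * s i) = b1 n \<Phi> (Inr (mm n i)) * hc (d - n) (s i)"
        using hc_homog_mult[OF hb1[OF i], of d "s i"] dn by simp
    qed
    have "\<mu> - B = hc d (\<mu> - (\<Sum>i\<le>n. b1 n \<Phi> (Inr (mm n i)) * s i))"
      using eB hc_homog[OF hmu] by (simp add: hc_diff)
    also have "\<dots> = Xp * \<nu>"
      unfolding e0 \<nu>_def using dn npos by (simp add: hc_homog_mult[OF homog_Xp])
    finally have muB: "\<mu> = B + Xp * \<nu>" by (simp add: algebra_simps)
    have hnu: "homog (d - 1) \<nu>" unfolding \<nu>_def by (rule homog_hc)
    have IXnu: "act (Xp * \<nu>) phi = (\<lambda>_. 0)"
    proof -
      have "Xp * \<nu> = \<mu> - B" using muB by simp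
      then show ?thesis using Imu JJ_I[OF BJ] by (simp add: act_diff)
    qed
    have d1: "d - 1 < d" using dn npos by simp
    show ?thesis
    proof (cases "2 * n - 1 < d")
      case True
      have dbig: "2 * n - 1 < d" using True .
      have "2 * n - 2 < d - 1" using dbig npos by arith
      then have "act \<nu> phi = (\<lambda>_. 0)"
        by (rule act_Dsp(2)[OF hnu phi_Dsp])
      then have "\<nu> \<in> JJ" using less.IH[OF d1 hnu] by blast
      then have "Xp * \<nu> \<in> JJ" by (rule JJ_mult)
      then show ?thesis using muB BJ JJ_add by simp
    next
      case False
      define e where "e = 2 * n - 1 - d"
      define \<theta> where "\<theta> = act \<nu> phi"
      have thD: "\<theta> \<in> Dsp e"
        unfolding \<theta>_def e_def using act_Dsp(1)[OF hnu phi_Dsp] False dn npos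
        by (simp add: numeral_2_eq_2)
      have thX: "act Xp \<theta> = (\<lambda>_. 0)" unfolding \<theta>_def using IXnu by (simp add: act_mult)
      have en: "e \<le> n - 1" unfolding e_def using dn by simp
      define T where "T = ym (n - 1 - e)"
      have TM: "T + s \<in> M0 (n - 1)" if "s \<in> M0 e" for s
        using that en by (simp add: M0_def T_def lookup_add)
      define Q where "Q = (\<Sum>s\<in>M0 e. cst (\<theta> s) * (mon T * P (dual (T + s))))"
      have dD: "dual (T + s) \<in> Dsp (n - 1)" if "s \<in> M0 e" for s
        using dual_Dsp[of "T + s"] M0_mdeg[OF TM[OF that]] by simp
      have actQ: "act Q phi = \<theta>"
      proof -
        have "act Q phi = (\<lambda>v. \<Sum>s\<in>M0 e. \<theta> s * act (mon T * P (dual (T + s))) phi v)"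
          unfolding Q_def by (simp add: act_sum act_cst_mult)
        also have "\<dots> = (\<lambda>v. \<Sum>s\<in>M0 e. \<theta> s * dual s v)"
        proof (intro ext sum.cong refl)
          fix v s assume "s \<in> M0 e"
          have "act (mon T * P (dual (T + s))) phi = act (mon T) (dual (T + s))"
            using P_props(2)[OF dD[OF \<open>s \<in> M0 e\<close>]] by (simp add: act_mult)
          also have "\<dots> = dual s" by (rule act_mon_dual_add)
          finally show "\<theta> s * act (mon T * P (dual (T + s))) phi v = \<theta> s * dual s v" by simp
        qed
        also have "\<dots> = \<theta>" using dual_expand_gen[OF thD thX] by simp
        finally show ?thesis .
      qed
      have hQ: "homog (d - 1) Q"
        unfolding Q_def
      proof (intro homog_sum homog_cst_mult)
        fix s assume "s \<in> M0 e"
        have "homog (mdeg T + (n - 1)) (mon T * P (dual (T + s)))"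
          by (rule homog_mult[OF homog_mon P_props(1)[OF dD[OF \<open>s \<in> M0 e\<close>]]])
        moreover have "mdeg T + (n - 1) = d - 1" using False dn en by (simp add: T_def e_def)
        ultimately show "homog (d - 1) (mon T * P (dual (T + s)))" by simp
      qed simp
      define \<iota> where "\<iota> = \<nu> - Q"
      have hi: "homog (d - 1) \<iota>" unfolding \<iota>_def by (rule homog_diff[OF hnu hQ])
      have Ii: "act \<iota> phi = (\<lambda>_. 0)" unfolding \<iota>_def by (simp add: act_diff actQ \<theta>_def)
      have iJ: "\<iota> \<in> JJ" using less.IH[OF d1 hi Ii] .
      have XQ: "Xp * Q = (\<Sum>s\<in>M0 e. b1 n \<Phi> (Inl (T + s)) * (cst (\<theta> s) * mon T))"
        unfolding Q_def by (simp add: sum_distrib_left algebra_simps)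
      have XQJ: "Xp * Q \<in> JJ" unfolding XQ
      proof (rule JJ_sum)
        fix s assume "s \<in> M0 e"
        then have "Inl (T + s) \<in> Bidx n" unfolding Bidx_def using TM by blast
        then show "b1 n \<Phi> (Inl (T + s)) * (cst (\<theta> s) * mon T) \<in> JJ" by (rule JJ_gen)
      qed simp
      have "\<mu> = B + (Xp * \<iota> + Xp * Q)" using muB by (simp add: \<iota>_def algebra_simps)
      then show ?thesis using BJ JJ_mult[OF iJ] XQJ JJ_add by simp
    qed
  qed
qed

lemma I_sub_J:
  assumes "act \<mu> phi = (\<lambda>_. 0)"
  shows "\<mu> \<in> JJ"
proof -
  obtain N where N: "\<forall>m\<in>kys \<mu>. mdeg m \<le> N" using deg_bound by blast
  have "\<mu> = (\<Sum>d\<le>N. hc d \<mu>)" using N by (intro hc_decomp) auto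
  moreover have "(\<Sum>d\<le>N. hc d \<mu>) \<in> JJ"
  proof (rule JJ_sum)
    fix d show "hc d \<mu> \<in> JJ" by (rule I_sub_J_homog[OF homog_hc Iid_hc[OF assms]])
  qed simp
  ultimately show ?thesis by simp
qed

lemma JJ_eq_Iid: "beta1 n \<Phi> ` Fmod n = Iid \<Phi>"
proof
  show "beta1 n \<Phi> ` Fmod n \<subseteq> Iid \<Phi>" using beta1_I by (auto simp: Iid_def)
  show "Iid \<Phi> \<subseteq> beta1 n \<Phi> ` Fmod n" using I_sub_J by (auto simp: Iid_def JJ_def)
qed

end


declare One_nat_def [simp del]

lemma M0_mm_VZ: "m \<in> M0 d \<Longrightarrow> m = mm d (lkp m VZ) \<and> lkp m VZ \<le> d"
  by (auto simp: M0_eq)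

lemma rho_hc: "rho (hc D F) = hc D (rho F)"
  by (rule poly_mapping_eqI) (simp add: rho_def hc_def lookup_filt)

lemma rho_cst[simp]: "rho (cst c) = cst c"
  unfolding rho_def by (rule filt_id) (simp add: cst_def split: if_splits)

lemma homog_rho: "homog d F \<Longrightarrow> homog d (rho F)"
  unfolding homog_def rho_def using keys_filt by blast

definition hcm :: "nat \<Rightarrow> 'k::comm_ring_1 mpoly3 \<Rightarrow> 'k mpoly3" where
  "hcm D G = (if D = 0 then 0 else hc (D - 1) G)"

lemma hc_var_mult: "homog 1 V \<Longrightarrow> hc D (V * G) = V * hcm D G"
  by (simp add: hc_homog_mult hcm_def)

lemma homog_hcm: "homog (D - 1) (hcm D G)"
  by (simp add: hcm_def homog_hc)

lemma hb_sum:
  assumes "i \<le> n"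
  shows "(\<Sum>j<n. (Yp * cst (if i = Suc j then 1 else 0) - Zp * cst (if i = j then 1 else 0)) * G j) = hb n G i"
proof -
  have "(\<Sum>j<n. (Yp * cst (if i = Suc j then 1 else 0) - Zp * cst (if i = j then 1 else 0)) * G j)
      = (\<Sum>j<n. if j = i - 1 \<and> 0 < i then Yp * G j else 0) - (\<Sum>j<n. if j = i then Zp * G j else 0)"
    unfolding sum_subtractf[symmetric]
  proof (intro sum.cong refl)
    fix j
    show "(Yp * cst (if i = Suc j then 1 else 0) - Zp * cst (if i = j then 1 else 0)) * G j = (if j = i - 1 \<and> 0 < i then Yp * G j else 0) - (if j = i then Zp * G j else 0)"
      by (cases "i = j"; cases "i = Suc j") auto
  qed
  also have "\<dots> = hb n G i"
  proof -
    have "(\<Sum>j<n. if j = i - 1 \<and> 0 < i then Yp * G j else 0) = (if 0 < i then Yp * G (i - 1) else 0)"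
    proof (cases "0 < i")
      case True
      then have "i - 1 < n" using assms by arith
      then show ?thesis using True by (simp add: sum.delta')
    qed simp
    moreover have "(\<Sum>j<n. if j = i then Zp * G j else 0) = (if i < n then Zp * G i else 0)"
      by (simp add: sum.delta')
    ultimately show ?thesis by (simp add: hb_def)
  qed
  finally show ?thesis .
qed

lemma hbT_sum:
  assumes "j < n"
  shows "(\<Sum>i\<le>n. (- (Yp * cst (if i = Suc j then 1 else 0)) + Zp * cst (if i = j then 1 else 0)) * U i) = Zp * U j - Yp * U (Suc j)"
proof -
  have "(\<Sum>i\<le>n. (- (Yp * cst (if i = Suc j then 1 else 0)) + Zp * cst (if i = j then 1 else 0)) * U i)
      = (\<Sum>i\<le>n. if i = j then Zp * U i else 0) - (\<Sum>i\<le>n. if i = Suc j then Yp * U i else 0)"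
    unfolding sum_subtractf[symmetric]
  proof (intro sum.cong refl)
    fix i
    show "(- (Yp * cst (if i = Suc j then 1 else 0)) + Zp * cst (if i = j then 1 else 0)) * U i = (if i = j then Zp * U i else 0) - (if i = Suc j then Yp * U i else 0)"
      by (cases "i = j"; cases "i = Suc j") auto
  qed
  also have "\<dots> = Zp * U j - Yp * U (Suc j)" using assms by (simp add: sum.delta')
  finally show ?thesis .
qed

lemma rho_hb: "rho (hb n g i) = hb n (\<lambda>j. rho (g j)) i"
  by (simp add: hb_def rho_diff rho_Yp_mult rho_Zp_mult)

lemma hc_hb: "hc D (hb n g i) = hb n (\<lambda>j. hcm D (g j)) i"
  by (simp add: hb_def hc_diff hc_var_mult homog_Yp homog_Zp)

context resol begin

lemma lessThan_n: "{..n - 1} = {..<n}" using npos by auto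

lemma sum_M0n1: "(\<Sum>m\<in>M0 (n - 1). f m) = (\<Sum>j<n. f (mm (n - 1) j))"
  by (simp add: sum_M0 lessThan_n)

lemma Zp_mm_n: "j < n \<Longrightarrow> Zp * mon (mm (n - 1) j) = mon (mm n (Suc j))"
proof -
  assume "j < n"
  then have "j \<le> n - 1" by arith
  then show ?thesis using Zp_mm[of j "n - 1"] npos by (simp add: Suc_diff_1)
qed
lemma Yp_mm_n: "j < n \<Longrightarrow> Yp * mon (mm (n - 1) j) = mon (mm n j)"
proof -
  assume "j < n"
  then have "j \<le> n - 1" by arith
  then show ?thesis using Yp_mm[of j "n - 1"] npos by (simp add: Suc_diff_1)
qed

lemma lk_mon_mm: "i \<le> n \<Longrightarrow> k \<le> n \<Longrightarrow> lkp (mon (mm n k) :: 'k mpoly3) (mm n i) = (if i = k then 1 else 0)"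
  using mm_inj[of i n k] by (auto simp: lookup_mon)

lemma rho_form1: "rho ((Xp * cst A + Yp * cst B - Zp * cst C) * G) = (Yp * cst B - Zp * cst C) * rho G"
proof -
  have "(Xp * cst A + Yp * cst B - Zp * cst C) * G = Xp * (cst A * G) + Yp * (cst B * G) - Zp * (cst C * G)"
    by (simp add: algebra_simps)
  then have "rho ((Xp * cst A + Yp * cst B - Zp * cst C) * G) = Yp * (cst B * rho G) - Zp * (cst C * rho G)"
    by (simp only: rho_add rho_diff rho_Xp_mult rho_Yp_mult rho_Zp_mult rho_cst_mult add_0_left)
  then show ?thesis by (simp add: algebra_simps)
qed

lemma rho_form2: "rho ((Xp * cst A - Yp * cst B + Zp * cst C) * G) = (- (Yp * cst B) + Zp * cst C) * rho G"
proof -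
  have "(Xp * cst A - Yp * cst B + Zp * cst C) * G = Xp * (cst A * G) - Yp * (cst B * G) + Zp * (cst C * G)"
    by (simp add: algebra_simps)
  then have "rho ((Xp * cst A - Yp * cst B + Zp * cst C) * G) = 0 - Yp * (cst B * rho G) + Zp * (cst C * rho G)"
    by (simp only: rho_add rho_diff rho_Xp_mult rho_Yp_mult rho_Zp_mult rho_cst_mult)
  then show ?thesis by (simp add: algebra_simps)
qed

lemma rb_RL:
  assumes "i \<le> n" "j < n"
  shows "rho (b2 n \<Phi> (Inr (mm n i)) (Inl (mm (n - 1) j)) * G) = (Yp * cst (if i = Suc j then 1 else 0) - Zp * cst (if i = j then 1 else 0)) * rho G"
proof -
  have e1: "lkp (Zp * mon (mm (n - 1) j) :: 'k mpoly3) (mm n i) = (if i = Suc j then 1 else 0)"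
    using assms by (simp add: Zp_mm_n lk_mon_mm)
  have e2: "lkp (Yp * mon (mm (n - 1) j) :: 'k mpoly3) (mm n i) = (if i = j then 1 else 0)"
    using assms by (simp add: Yp_mm_n lk_mon_mm)
  show ?thesis by (simp only: b2.simps e1 e2 rho_form1)
qed

lemma rb_LR:
  assumes "i \<le> n" "j < n"
  shows "rho (b2 n \<Phi> (Inl (mm (n - 1) j)) (Inr (mm n i)) * G) = (- (Yp * cst (if i = Suc j then 1 else 0)) + Zp * cst (if i = j then 1 else 0)) * rho G"
proof -
  have e1: "act Zp (dual (mm n i)) (mm (n - 1) j) = (if i = Suc j then (1::'k) else 0)"
    using assms by (simp add: act_dual_eval mult.commute[of "mon _"] Zp_mm_n lk_mon_mm)
  have e2: "act Yp (dual (mm n i)) (mm (n - 1) j) = (if i = j then (1::'k) else 0)"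
    using assms by (simp add: act_dual_eval mult.commute[of "mon _"] Yp_mm_n lk_mon_mm)
  show ?thesis by (simp only: b2.simps e1 e2 rho_form2)
qed

lemma rb_XX:
  shows "rho (b2 n \<Phi> (Inl m1) (Inl m) * G) = 0" and "rho (b2 n \<Phi> (Inr m1) (Inr m) * G) = 0"
  by (simp_all only: b2.simps mult.assoc rho_Xp_mult)

end


lemma S1h:
  fixes a :: "nat \<Rightarrow> 'k::field mpoly3"
  assumes h: "\<forall>i\<le>n. homog D (a i)" and r: "\<forall>i\<le>n. rho (a i) = a i"
    and s: "(\<Sum>i\<le>n. mon (mm n i) * a i) = 0"
  shows "\<exists>g. (\<forall>j. homog (D - 1) (g j) \<and> rho (g j) = g j \<and> (D = 0 \<longrightarrow> g j = 0)) \<and> (\<forall>i\<le>n. a i = hb n g i)"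
proof -
  obtain g where g: "\<forall>i\<le>n. a i = hb n g i" using S1[OF s] by blast
  define g' where "g' = (\<lambda>j. rho (hcm D (g j)))"
  have "a i = hb n g' i" if "i \<le> n" for i
  proof -
    have "a i = rho (hc D (a i))" using h r that by (simp add: hc_homog)
    also have "\<dots> = rho (hc D (hb n g i))" using g that by simp
    also have "\<dots> = hb n g' i" by (simp add: hc_hb rho_hb g'_def)
    finally show ?thesis .
  qed
  moreover have "homog (D - 1) (g' j) \<and> rho (g' j) = g' j \<and> (D = 0 \<longrightarrow> g' j = 0)" for j
  proof (intro conjI)
    show "homog (D - 1) (g' j)" unfolding g'_def by (rule homog_rho[OF homog_hcm])
    show "rho (g' j) = g' j" by (simp add: g'_def rho_rho)
    show "D = 0 \<longrightarrow> g' j = 0" by (simp add: g'_def hcm_def)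
  qed
  ultimately show ?thesis by blast
qed

lemma S2h:
  fixes h :: "nat \<Rightarrow> 'k::field mpoly3"
  assumes hh: "\<forall>j<n. homog D (h j)"
    and c: "\<forall>v. (\<Sum>j<n. act (h j) (dual (mm (n - 1) j)) v) = 0"
  shows "\<exists>u. (\<forall>i. homog (D - 1) (u i) \<and> rho (u i) = u i \<and> (D = 0 \<longrightarrow> u i = 0)) \<and> (\<forall>j<n. rho (h j) = Zp * u j - Yp * u (Suc j))"
proof -
  obtain u c where uc: "\<forall>j<n. h j = Zp * u j - Yp * u (Suc j) + Xp * c j" using S2[OF c] by blast
  define u' where "u' = (\<lambda>i. rho (hcm D (u i)))"
  have "rho (h j) = Zp * u' j - Yp * u' (Suc j)" if "j < n" for j
  proof -
    have "rho (h j) = rho (hc D (h j))" using hh that by (simp add: hc_homog)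
    also have "\<dots> = rho (hc D (Zp * u j - Yp * u (Suc j) + Xp * c j))" using uc that by simp
    also have "\<dots> = Zp * u' j - Yp * u' (Suc j)"
      by (simp add: u'_def hc_add hc_diff hc_var_mult homog_Xp homog_Yp homog_Zp rho_add rho_diff rho_Xp_mult rho_Yp_mult rho_Zp_mult)
    finally show ?thesis .
  qed
  moreover have "homog (D - 1) (u' i) \<and> rho (u' i) = u' i \<and> (D = 0 \<longrightarrow> u' i = 0)" for i
  proof (intro conjI)
    show "homog (D - 1) (u' i)" unfolding u'_def by (rule homog_rho[OF homog_hcm])
    show "rho (u' i) = u' i" by (simp add: u'_def rho_rho)
    show "D = 0 \<longrightarrow> u' i = 0" by (simp add: u'_def hcm_def)
  qed
  ultimately show ?thesis by blast
qed

lemma S4h: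
  fixes u :: "nat \<Rightarrow> 'k::field mpoly3"
  assumes hu: "\<forall>i\<le>n. homog D (u i)"
    and c: "\<forall>j<n. rho (Zp * u j - Yp * u (Suc j)) = 0"
  shows "\<exists>t. homog (D - n) t \<and> rho t = t \<and> (D < n \<longrightarrow> t = 0) \<and> (\<forall>i\<le>n. rho (u i) = mon (mm n i) * t)"
proof -
  obtain t where t: "\<forall>i\<le>n. rho (u i) = mon (mm n i) * t" using S4[OF c] by blast
  define t' where "t' = (if n \<le> D then rho (hc (D - n) t) else 0)"
  have "rho (u i) = mon (mm n i) * t'" if "i \<le> n" for i
  proof -
    have hm: "homog n (mon (mm n i) :: 'k mpoly3)" using homog_mon[of "mm n i"] mdeg_mm[OF that] by simp
    have "rho (u i) = rho (rho (hc D (u i)))" using hu that by (simp add: hc_homog rho_rho)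
    also have "\<dots> = rho (hc D (mon (mm n i) * t))" using t that by (simp add: rho_hc)
    also have "\<dots> = mon (mm n i) * t'"
      by (simp add: hc_homog_mult[OF hm] t'_def rho_mon_mult)
    finally show ?thesis .
  qed
  moreover have "homog (D - n) t' \<and> rho t' = t' \<and> (D < n \<longrightarrow> t' = 0)"
    by (simp add: t'_def homog_rho homog_hc rho_rho)
  ultimately show ?thesis by blast
qed

lemma Fmod_add: "a \<in> Fmod n \<Longrightarrow> b \<in> Fmod n \<Longrightarrow> (\<lambda>k. a k + b k) \<in> Fmod n"
  by (simp add: Fmod_def)
lemma Fmod_diff: "a \<in> Fmod n \<Longrightarrow> b \<in> Fmod n \<Longrightarrow> (\<lambda>k. a k - b k) \<in> Fmod n"
  by (simp add: Fmod_def)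
lemma Fmod_scale: "a \<in> Fmod n \<Longrightarrow> (\<lambda>k. r * a k) \<in> Fmod n"
  by (simp add: Fmod_def)
lemma Fmod_sum: "finite A \<Longrightarrow> (\<And>d. d \<in> A \<Longrightarrow> w d \<in> Fmod n) \<Longrightarrow> (\<lambda>k. \<Sum>d\<in>A. w d k) \<in> Fmod n"
  by (simp add: Fmod_def)
lemma beta2_Fmod: "beta2 n \<Phi> w \<in> Fmod n"
  by (simp add: Fmod_def beta2_def)
lemma beta3_Fmod: "beta3 n \<Phi> r \<in> Fmod n"
  by (simp add: Fmod_def beta3_def)

lemma beta2_add: "beta2 n \<Phi> (\<lambda>k. a k + b k) = (\<lambda>i. beta2 n \<Phi> a i + beta2 n \<Phi> b i)"
  by (rule ext) (simp add: beta2_def distrib_left sum.distrib)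
lemma beta2_scale: "beta2 n \<Phi> (\<lambda>k. r * a k) = (\<lambda>i. r * beta2 n \<Phi> a i)"
  by (rule ext) (simp add: beta2_def sum_distrib_left algebra_simps)
lemma beta2_sum: "finite A \<Longrightarrow> beta2 n \<Phi> (\<lambda>k. \<Sum>d\<in>A. w d k) = (\<lambda>i. \<Sum>d\<in>A. beta2 n \<Phi> (w d) i)"
  by (rule ext) (auto simp: beta2_def sum_distrib_left intro: sum.swap)
lemma beta1_diff: "beta1 n \<Phi> (\<lambda>k. a k - b k) = beta1 n \<Phi> a - beta1 n \<Phi> b"
  by (simp add: beta1_def right_diff_distrib sum_subtractf)
lemma beta1_scale: "beta1 n \<Phi> (\<lambda>k. r * a k) = r * beta1 n \<Phi> a"
  by (simp add: beta1_def sum_distrib_left algebra_simps)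
lemma beta3_add: "beta3 n \<Phi> (a + b) = (\<lambda>i. beta3 n \<Phi> a i + beta3 n \<Phi> b i)"
  by (rule ext) (simp add: beta3_def distrib_left)
lemma beta3_sum: "finite A \<Longrightarrow> beta3 n \<Phi> (\<Sum>d\<in>A. r d) = (\<lambda>i. \<Sum>d\<in>A. beta3 n \<Phi> (r d) i)"
  by (rule ext) (simp add: beta3_def sum_distrib_left)

lemma homog_beta2:
  assumes "\<forall>k. homog (D - 1) (w k)" "D = 0 \<longrightarrow> (\<forall>k. w k = 0)"
  shows "homog D (beta2 n \<Phi> w i)"
proof (cases "D = 0")
  case True
  then show ?thesis using assms by (simp add: beta2_def)
next
  case False
  have "homog (1 + (D - 1)) (b2 n \<Phi> i j * w j)" for j
    by (rule homog_mult[OF _ assms(1)[rule_format]]) (cases i; cases j; simp only: b2.simps; (rule homog_add homog_diff homog_var_cst homog_Xp homog_Yp homog_Zp)+)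
  then have "homog D (b2 n \<Phi> i j * w j)" for j using False by simp
  then show ?thesis by (simp add: beta2_def homog_sum)
qed

context resol begin

lemma rho_beta1: "rho (beta1 n \<Phi> f) = (\<Sum>i\<le>n. mon (mm n i) * rho (f (Inr (mm n i))))"
proof -
  have "rho (beta1 n \<Phi> f) = (\<Sum>m\<in>M0 (n - 1). rho (b1 n \<Phi> (Inl m) * f (Inl m))) + (\<Sum>m\<in>M0 n. rho (b1 n \<Phi> (Inr m) * f (Inr m)))"
    by (simp add: beta1_def sum_Bidx rho_add rho_sum)
  also have "(\<Sum>m\<in>M0 (n - 1). rho (b1 n \<Phi> (Inl m) * f (Inl m))) = 0"
    by (simp add: mult.assoc rho_Xp_mult)
  also have "(\<Sum>m\<in>M0 n. rho (b1 n \<Phi> (Inr m) * f (Inr m))) = (\<Sum>m\<in>M0 n. mon m * rho (f (Inr m)))"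
  proof (intro sum.cong refl)
    fix m assume "m \<in> M0 n"
    then have "lkp m VX = 0" by (rule M0_X)
    then show "rho (b1 n \<Phi> (Inr m) * f (Inr m)) = mon m * rho (f (Inr m))"
      by (simp add: left_diff_distrib rho_diff mult.assoc rho_Xp_mult rho_mon_mult)
  qed
  finally show ?thesis by (simp add: sum_M0)
qed

lemma beta1_beta2: "beta1 n \<Phi> (beta2 n \<Phi> w) = 0"
proof -
  have "beta1 n \<Phi> (beta2 n \<Phi> w) = (\<Sum>i\<in>Bidx n. \<Sum>j\<in>Bidx n. b1 n \<Phi> i * (b2 n \<Phi> i j * w j))"
    by (simp add: beta1_def beta2_def sum_distrib_left)
  also have "\<dots> = (\<Sum>j\<in>Bidx n. (\<Sum>i\<in>Bidx n. b1 n \<Phi> i * b2 n \<Phi> i j) * w j)"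
    by (subst sum.swap) (simp add: sum_distrib_right mult.assoc)
  also have "\<dots> = 0" by (simp add: complex12)
  finally show ?thesis .
qed

lemma beta2_beta3: "beta2 n \<Phi> (beta3 n \<Phi> r) = (\<lambda>_. 0)"
proof
  fix i
  have "(\<Sum>j\<in>Bidx n. b2 n \<Phi> i j * beta3 n \<Phi> r j) = (\<Sum>j\<in>Bidx n. b2 n \<Phi> i j * b3 n \<Phi> j) * r"
    by (simp add: beta3_def sum_distrib_right mult.assoc)
  then show "beta2 n \<Phi> (beta3 n \<Phi> r) i = 0"
    by (simp add: beta2_def complex23)
qed

lemma Bidx_cases:
  assumes "k \<in> Bidx n"
  obtains (L) j where "j < n" "k = Inl (mm (n - 1) j)" | (R) i where "i \<le> n" "k = Inr (mm n i)"
proof -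
  from assms consider (L) m where "m \<in> M0 (n - 1)" "k = Inl m" | (R) m where "m \<in> M0 n" "k = Inr m"
    unfolding Bidx_def by blast
  then show ?thesis
  proof cases
    case L
    have e: "m = mm (n - 1) (lkp m VZ)" and l: "lkp m VZ \<le> n - 1" using M0_mm_VZ[OF L(1)] by auto
    have "lkp m VZ < n" using l npos by arith
    moreover have "k = Inl (mm (n - 1) (lkp m VZ))" using L(2) e by simp
    ultimately show ?thesis by (rule that(1))
  next
    case R
    have e: "m = mm n (lkp m VZ)" and l: "lkp m VZ \<le> n" using M0_mm_VZ[OF R(1)] by auto
    have "k = Inr (mm n (lkp m VZ))" using R(2) e by simp
    with l show ?thesis by (rule that(2))
  qed
qed

lemma inL: "j < n \<Longrightarrow> Inl (mm (n - 1) j) \<in> Bidx n"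
  by (simp add: Bidx_def mm_in_M0)
lemma inR: "i \<le> n \<Longrightarrow> Inr (mm n i) \<in> Bidx n"
  by (simp add: Bidx_def mm_in_M0)

lemma Xp_divide:
  fixes f :: "bidx \<Rightarrow> 'k mpoly3"
  assumes "f \<in> Fmod n" "\<forall>k. homog D (f k)" "\<forall>k\<in>Bidx n. rho (f k) = 0"
  shows "\<exists>f3\<in>Fmod n. (\<forall>k. homog (D - 1) (f3 k)) \<and> (D = 0 \<longrightarrow> (\<forall>k. f3 k = 0)) \<and> f = (\<lambda>k. Xp * f3 k)"
proof -
  have "\<forall>k. \<exists>q. f k = Xp * q"
  proof
    fix k
    show "\<exists>q. f k = Xp * q"
    proof (cases "k \<in> Bidx n")
      case True
      then have "rho (f k) = 0" using assms(3) by blast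
      then show ?thesis by (simp only: rho_eq_zero_iff)
    next
      case False
      then have "f k = Xp * 0" using assms(1) by (simp add: Fmod_def)
      then show ?thesis by blast
    qed
  qed
  then obtain q where q: "\<forall>k. f k = Xp * q k" by (rule choice[THEN exE])
  define f3 where "f3 k = hcm D (q k)" for k
  have fe: "f k = Xp * f3 k" for k
  proof -
    have "f k = hc D (f k)" using assms(2) by (simp add: hc_homog)
    also have "\<dots> = Xp * f3 k" using q by (simp add: f3_def hc_var_mult homog_Xp)
    finally show ?thesis .
  qed
  have fm: "f3 \<in> Fmod n"
    unfolding Fmod_def
  proof (intro CollectI allI impI)
    fix k assume kn: "k \<notin> Bidx n"
    have "f k = 0" using assms(1) kn unfolding Fmod_def by blast
    then have "Xp * f3 k = 0" using fe[of k] by simp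
    then have "(Xp :: 'k mpoly3) = 0 \<or> f3 k = 0" by (rule iffD1[OF mult_eq_0_iff])
    then show "f3 k = 0" using Xp_nz[where 'k='k] by (elim disjE) simp_all
  qed
  have h3: "\<forall>k. homog (D - 1) (f3 k)" by (simp add: f3_def homog_hcm)
  have z3: "D = 0 \<longrightarrow> (\<forall>k. f3 k = 0)" by (simp add: f3_def hcm_def)
  have fx: "f = (\<lambda>k. Xp * f3 k)" by (rule ext) (rule fe)
  show ?thesis
  proof (rule bexI[where x=f3])
    show "(\<forall>k. homog (D - 1) (f3 k)) \<and> (D = 0 \<longrightarrow> (\<forall>k. f3 k = 0)) \<and> f = (\<lambda>k. Xp * f3 k)"
      by (rule conjI[OF h3 conjI[OF z3 fx]])
  qed (rule fm)
qed

end


context resol begin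

lemma actPhi_b1L: "m \<in> M0 (n - 1) \<Longrightarrow> act (b1 n \<Phi> (Inl m) * F) \<Phi> = act F (dual m)"
proof -
  assume m: "m \<in> M0 (n - 1)"
  have "dual m \<in> Dsp (n - 1)" using dual_Dsp[of m] M0_mdeg[OF m] by simp
  then have pd: "act (P (dual m)) phi = dual m" by (rule P_props(2))
  have "act (b1 n \<Phi> (Inl m) * F) \<Phi> = act F (act (P (dual m)) (act Xp \<Phi>))"
    by (simp add: act_mult_rev mult.commute[of F])
  then show ?thesis using pd by simp
qed

lemma actPhi_b1R: "m \<in> M0 n \<Longrightarrow> act (b1 n \<Phi> (Inr m) * (Xp * q)) \<Phi> = (\<lambda>_. 0)"
proof -
  assume m: "m \<in> M0 n"
  have "b1 n \<Phi> (Inr m) * (Xp * q) = Xp * b1 n \<Phi> (Inr m) * q" by (simp add: algebra_simps)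
  then have "act (b1 n \<Phi> (Inr m) * (Xp * q)) \<Phi> = act q (act (b1 n \<Phi> (Inr m)) phi)"
    by (simp only: act_mult_rev)
  also have "act (b1 n \<Phi> (Inr m)) phi = (\<lambda>_. 0)" by (rule b1_I) (simp add: Bidx_def m)
  finally show ?thesis by simp
qed

lemma E1h:
  fixes f :: "bidx \<Rightarrow> 'k mpoly3"
  assumes "f \<in> Fmod n" "\<forall>k. homog D (f k)" "beta1 n \<Phi> f = 0"
  shows "\<exists>w\<in>Fmod n. f = beta2 n \<Phi> w"
  using assms
proof (induction D arbitrary: f rule: less_induct)
  case (less D)
  note fF = less.prems(1) and fh = less.prems(2) and fb = less.prems(3)
  \<comment> \<open>Step 1: kill the Inr part modulo x\<close>
  define a where "a i = rho (f (Inr (mm n i)))" for i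
  have "(\<Sum>i\<le>n. mon (mm n i) * a i) = 0" using rho_beta1[of f] fb by (simp add: a_def)
  moreover have "\<forall>i\<le>n. homog D (a i)" using fh by (simp add: a_def homog_rho)
  moreover have "\<forall>i\<le>n. rho (a i) = a i" by (simp add: a_def rho_rho)
  ultimately obtain g where g: "\<forall>j. homog (D - 1) (g j) \<and> rho (g j) = g j \<and> (D = 0 \<longrightarrow> g j = 0)"
    and ag: "\<forall>i\<le>n. a i = hb n g i"
    using S1h by blast
  define w1 :: "bidx \<Rightarrow> 'k mpoly3" where
    "w1 k = (case k of Inl m \<Rightarrow> if m \<in> M0 (n - 1) then g (lkp m VZ) else 0 | Inr m \<Rightarrow> 0)" for k
  have w1F: "w1 \<in> Fmod n" by (auto simp: Fmod_def w1_def Bidx_def split: sum.splits)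
  have w1h: "\<forall>k. homog (D - 1) (w1 k)" using g by (auto simp: w1_def split: sum.splits)
  have w1z: "D = 0 \<longrightarrow> (\<forall>k. w1 k = 0)" using g by (auto simp: w1_def split: sum.splits)
  have w1R: "w1 (Inr m) = 0" for m by (simp add: w1_def)
  have w1L: "w1 (Inl (mm (n - 1) j)) = g j" if "j < n" for j
  proof -
    have "j \<le> n - 1" using that by arith
    then show ?thesis by (simp add: w1_def mm_in_M0)
  qed
  define f1 where "f1 k = f k - beta2 n \<Phi> w1 k" for k
  have f1F: "f1 \<in> Fmod n" unfolding f1_def[abs_def] by (rule Fmod_diff[OF fF beta2_Fmod])
  have f1h: "\<forall>k. homog D (f1 k)" using fh homog_beta2[OF w1h w1z] by (simp add: f1_def homog_diff)
  have f1b: "beta1 n \<Phi> f1 = 0" unfolding f1_def[abs_def] using fb by (simp add: beta1_diff beta1_beta2)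
  have f1R: "rho (f1 (Inr (mm n i))) = 0" if i: "i \<le> n" for i
  proof -
    have "rho (beta2 n \<Phi> w1 (Inr (mm n i))) = (\<Sum>j<n. rho (b2 n \<Phi> (Inr (mm n i)) (Inl (mm (n - 1) j)) * w1 (Inl (mm (n - 1) j))))"
      using inR[OF i] by (simp add: beta2_def sum_Bidx rho_add rho_sum sum_M0n1 w1R)
    also have "\<dots> = (\<Sum>j<n. (Yp * cst (if i = Suc j then 1 else 0) - Zp * cst (if i = j then 1 else 0)) * g j)"
    proof (intro sum.cong refl)
      fix j assume "j \<in> {..<n}"
      then have j: "j < n" by simp
      show "rho (b2 n \<Phi> (Inr (mm n i)) (Inl (mm (n - 1) j)) * w1 (Inl (mm (n - 1) j))) = (Yp * cst (if i = Suc j then 1 else 0) - Zp * cst (if i = j then 1 else 0)) * g j"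
        using g by (simp only: w1L[OF j] rb_RL[OF i j]; simp)
    qed
    also have "\<dots> = hb n g i" by (rule hb_sum[OF i])
    finally show ?thesis using ag i by (simp add: f1_def rho_diff a_def)
  qed
  \<comment> \<open>Step 2: kill the Inl part modulo x\<close>
  define h where "h j = f1 (Inl (mm (n - 1) j))" for j
  have cond: "\<forall>v. (\<Sum>j<n. act (h j) (dual (mm (n - 1) j)) v) = 0"
  proof
    fix v
    have q: "\<exists>q. f1 (Inr m) = Xp * q" if "m \<in> M0 n" for m
    proof -
      have "m = mm n (lkp m VZ)" "lkp m VZ \<le> n" using M0_mm_VZ[OF that] by auto
      then have "rho (f1 (Inr m)) = 0" using f1R by metis
      then show ?thesis by (simp only: rho_eq_zero_iff)
    qed
    have "act (beta1 n \<Phi> f1) \<Phi> v = (\<Sum>m\<in>M0 (n - 1). act (b1 n \<Phi> (Inl m) * f1 (Inl m)) \<Phi> v) + (\<Sum>m\<in>M0 n. act (b1 n \<Phi> (Inr m) * f1 (Inr m)) \<Phi> v)"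
      by (simp add: beta1_def sum_Bidx act_add act_sum)
    also have "(\<Sum>m\<in>M0 n. act (b1 n \<Phi> (Inr m) * f1 (Inr m)) \<Phi> v) = 0"
    proof (intro sum.neutral ballI)
      fix m assume m: "m \<in> M0 n"
      then obtain q where "f1 (Inr m) = Xp * q" using q by blast
      then show "act (b1 n \<Phi> (Inr m) * f1 (Inr m)) \<Phi> v = 0" using actPhi_b1R[OF m] by simp
    qed
    also have "(\<Sum>m\<in>M0 (n - 1). act (b1 n \<Phi> (Inl m) * f1 (Inl m)) \<Phi> v) = (\<Sum>m\<in>M0 (n - 1). act (f1 (Inl m)) (dual m) v)"
    proof (intro sum.cong refl)
      fix m assume m: "m \<in> M0 (n - 1)"
      show "act (b1 n \<Phi> (Inl m) * f1 (Inl m)) \<Phi> v = act (f1 (Inl m)) (dual m) v"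
        by (simp only: actPhi_b1L[OF m])
    qed
    finally show "(\<Sum>j<n. act (h j) (dual (mm (n - 1) j)) v) = 0"
      using f1b by (simp add: sum_M0n1 h_def)
  qed
  have "\<forall>j<n. homog D (h j)" using f1h by (simp add: h_def)
  then obtain u where u: "\<forall>i. homog (D - 1) (u i) \<and> rho (u i) = u i \<and> (D = 0 \<longrightarrow> u i = 0)"
    and hu: "\<forall>j<n. rho (h j) = Zp * u j - Yp * u (Suc j)"
    using S2h[OF _ cond] by blast
  define w2 :: "bidx \<Rightarrow> 'k mpoly3" where
    "w2 k = (case k of Inl m \<Rightarrow> 0 | Inr m \<Rightarrow> if m \<in> M0 n then u (lkp m VZ) else 0)" for k
  have w2F: "w2 \<in> Fmod n" by (auto simp: Fmod_def w2_def Bidx_def split: sum.splits)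
  have w2h: "\<forall>k. homog (D - 1) (w2 k)" using u by (auto simp: w2_def split: sum.splits)
  have w2z: "D = 0 \<longrightarrow> (\<forall>k. w2 k = 0)" using u by (auto simp: w2_def split: sum.splits)
  have w2L: "w2 (Inl m) = 0" for m by (simp add: w2_def)
  have w2R: "w2 (Inr (mm n i)) = u i" if "i \<le> n" for i
    using that by (simp add: w2_def mm_in_M0)
  define f2 where "f2 k = f1 k - beta2 n \<Phi> w2 k" for k
  have f2F: "f2 \<in> Fmod n" unfolding f2_def[abs_def] by (rule Fmod_diff[OF f1F beta2_Fmod])
  have f2h: "\<forall>k. homog D (f2 k)" using f1h homog_beta2[OF w2h w2z] by (simp add: f2_def homog_diff)
  have f2b: "beta1 n \<Phi> f2 = 0" unfolding f2_def[abs_def] using f1b by (simp add: beta1_diff beta1_beta2)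
  have f2rho: "\<forall>k\<in>Bidx n. rho (f2 k) = 0"
  proof
    fix k assume k: "k \<in> Bidx n"
    then show "rho (f2 k) = 0"
    proof (cases rule: Bidx_cases)
      case (L j)
      have "rho (beta2 n \<Phi> w2 (Inl (mm (n - 1) j))) = (\<Sum>i\<le>n. rho (b2 n \<Phi> (Inl (mm (n - 1) j)) (Inr (mm n i)) * w2 (Inr (mm n i))))"
        using inL[OF L(1)] by (simp add: beta2_def sum_Bidx rho_add rho_sum sum_M0 w2L)
      also have "\<dots> = (\<Sum>i\<le>n. (- (Yp * cst (if i = Suc j then 1 else 0)) + Zp * cst (if i = j then 1 else 0)) * u i)"
      proof (intro sum.cong refl)
        fix i assume "i \<in> {..n}"
        then have i: "i \<le> n" by simp
        show "rho (b2 n \<Phi> (Inl (mm (n - 1) j)) (Inr (mm n i)) * w2 (Inr (mm n i))) = (- (Yp * cst (if i = Suc j then 1 else 0)) + Zp * cst (if i = j then 1 else 0)) * u i"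
          using u by (simp only: w2R[OF i] rb_LR[OF i L(1)]; simp)
      qed
      also have "\<dots> = Zp * u j - Yp * u (Suc j)" by (rule hbT_sum[OF L(1)])
      finally show ?thesis using hu L by (simp add: f2_def rho_diff h_def)
    next
      case (R i)
      have "rho (beta2 n \<Phi> w2 (Inr (mm n i))) = (\<Sum>m\<in>M0 n. rho (b2 n \<Phi> (Inr (mm n i)) (Inr m) * w2 (Inr m)))"
        using inR[OF R(1)] by (simp add: beta2_def sum_Bidx rho_add rho_sum w2L)
      also have "\<dots> = 0" by (simp only: rb_XX sum.neutral_const)
      finally show ?thesis using f1R[OF R(1)] R by (simp add: f2_def rho_diff)
    qed
  qed
  obtain f3 where f3F: "f3 \<in> Fmod n" and f3h: "\<forall>k. homog (D - 1) (f3 k)"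
    and f3z: "D = 0 \<longrightarrow> (\<forall>k. f3 k = 0)" and f23: "f2 = (\<lambda>k. Xp * f3 k)"
    using Xp_divide[OF f2F f2h f2rho] by blast
  have ff: "f = (\<lambda>k. beta2 n \<Phi> w1 k + beta2 n \<Phi> w2 k + Xp * f3 k)"
  proof
    fix k
    have "f2 k = Xp * f3 k" using f23 by simp
    then show "f k = beta2 n \<Phi> w1 k + beta2 n \<Phi> w2 k + Xp * f3 k"
      by (simp add: f2_def f1_def algebra_simps)
  qed
  show ?case
  proof (cases "D = 0")
    case True
    then have "f = beta2 n \<Phi> (\<lambda>k. w1 k + w2 k)" using ff f3z by (simp add: beta2_add)
    then show ?thesis using Fmod_add[OF w1F w2F] by blast
  next
    case False
    have "Xp * beta1 n \<Phi> f3 = 0" using f2b f23 by (simp add: beta1_scale[symmetric])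
    then have "(Xp :: 'k mpoly3) = 0 \<or> beta1 n \<Phi> f3 = 0" by (rule iffD1[OF mult_eq_0_iff])
    then have "beta1 n \<Phi> f3 = 0" using Xp_nz[where 'k='k] by (elim disjE) simp_all
    then obtain w3 where w3F: "w3 \<in> Fmod n" and w3: "f3 = beta2 n \<Phi> w3"
      using less.IH[of "D - 1" f3] False f3F f3h by auto
    have "f = beta2 n \<Phi> (\<lambda>k. w1 k + w2 k + Xp * w3 k)"
      using ff w3 by (simp add: beta2_add beta2_scale)
    moreover have "(\<lambda>k. w1 k + w2 k + Xp * w3 k) \<in> Fmod n"
      by (rule Fmod_add[OF Fmod_add[OF w1F w2F] Fmod_scale[OF w3F]])
    ultimately show ?thesis by blast
  qed
qed

end


lemma beta2_diff: "beta2 n \<Phi> (\<lambda>k. a k - b k) = (\<lambda>i. beta2 n \<Phi> a i - beta2 n \<Phi> b i)"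
  by (rule ext) (simp add: beta2_def right_diff_distrib sum_subtractf)

context resol begin

lemma rho_b1R: "m \<in> M0 n \<Longrightarrow> rho (b1 n \<Phi> (Inr m)) = mon m"
proof -
  assume m: "m \<in> M0 n"
  have "rho (mon m :: 'k mpoly3) = rho (mon m * 1)" by simp
  also have "\<dots> = mon m" using rho_mon_mult[of m "1 :: 'k mpoly3"] rho_cst[of "1::'k"] M0_X[OF m] by simp
  finally have "rho (mon m :: 'k mpoly3) = mon m" .
  then show ?thesis by (simp add: rho_diff rho_Xp_mult)
qed

lemma b1R_nz: "m \<in> M0 n \<Longrightarrow> b1 n \<Phi> (Inr m) \<noteq> 0"
  using rho_b1R mon_nz[of m, where 'k='k] by force

lemma E2h:
  fixes f :: "bidx \<Rightarrow> 'k mpoly3"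
  assumes "f \<in> Fmod n" "\<forall>k. homog D (f k)" "beta2 n \<Phi> f = (\<lambda>_. 0)"
  shows "\<exists>r. f = beta3 n \<Phi> r"
  using assms
proof (induction D arbitrary: f rule: less_induct)
  case (less D)
  note fF = less.prems(1) and fh = less.prems(2) and fb = less.prems(3)
  define gL where "gL j = f (Inl (mm (n - 1) j))" for j
  define uR where "uR i = f (Inr (mm n i))" for i
  have a: "\<forall>i\<le>n. rho (hb n gL i) = 0"
  proof (intro allI impI)
    fix i assume i: "i \<le> n"
    have "0 = rho (beta2 n \<Phi> f (Inr (mm n i)))" using fb by simp
    also have "\<dots> = (\<Sum>j<n. rho (b2 n \<Phi> (Inr (mm n i)) (Inl (mm (n - 1) j)) * gL j)) + (\<Sum>m\<in>M0 n. rho (b2 n \<Phi> (Inr (mm n i)) (Inr m) * f (Inr m)))"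
      using inR[OF i] by (simp add: beta2_def sum_Bidx rho_add rho_sum sum_M0n1 gL_def)
    also have "(\<Sum>m\<in>M0 n. rho (b2 n \<Phi> (Inr (mm n i)) (Inr m) * f (Inr m))) = 0"
      by (simp only: rb_XX sum.neutral_const)
    also have "(\<Sum>j<n. rho (b2 n \<Phi> (Inr (mm n i)) (Inl (mm (n - 1) j)) * gL j)) = (\<Sum>j<n. (Yp * cst (if i = Suc j then 1 else 0) - Zp * cst (if i = j then 1 else 0)) * rho (gL j))"
    proof (intro sum.cong refl)
      fix j assume "j \<in> {..<n}"
      then have j: "j < n" by simp
      show "rho (b2 n \<Phi> (Inr (mm n i)) (Inl (mm (n - 1) j)) * gL j) = (Yp * cst (if i = Suc j then 1 else 0) - Zp * cst (if i = j then 1 else 0)) * rho (gL j)"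
        by (simp only: rb_RL[OF i j])
    qed
    also have "\<dots> = hb n (\<lambda>j. rho (gL j)) i" by (rule hb_sum[OF i])
    finally show "rho (hb n gL i) = 0" by (simp add: rho_hb)
  qed
  have gL0: "\<forall>j<n. rho (gL j) = 0" using S3[OF a] .
  have b: "\<forall>j<n. rho (Zp * uR j - Yp * uR (Suc j)) = 0"
  proof (intro allI impI)
    fix j assume j: "j < n"
    have "0 = rho (beta2 n \<Phi> f (Inl (mm (n - 1) j)))" using fb by simp
    also have "\<dots> = (\<Sum>m\<in>M0 (n - 1). rho (b2 n \<Phi> (Inl (mm (n - 1) j)) (Inl m) * f (Inl m))) + (\<Sum>i\<le>n. rho (b2 n \<Phi> (Inl (mm (n - 1) j)) (Inr (mm n i)) * uR i))"
      using inL[OF j] by (simp add: beta2_def sum_Bidx rho_add rho_sum sum_M0 uR_def)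
    also have "(\<Sum>m\<in>M0 (n - 1). rho (b2 n \<Phi> (Inl (mm (n - 1) j)) (Inl m) * f (Inl m))) = 0"
      by (simp only: rb_XX sum.neutral_const)
    also have "(\<Sum>i\<le>n. rho (b2 n \<Phi> (Inl (mm (n - 1) j)) (Inr (mm n i)) * uR i)) = (\<Sum>i\<le>n. (- (Yp * cst (if i = Suc j then 1 else 0)) + Zp * cst (if i = j then 1 else 0)) * rho (uR i))"
    proof (intro sum.cong refl)
      fix i assume "i \<in> {..n}"
      then have i: "i \<le> n" by simp
      show "rho (b2 n \<Phi> (Inl (mm (n - 1) j)) (Inr (mm n i)) * uR i) = (- (Yp * cst (if i = Suc j then 1 else 0)) + Zp * cst (if i = j then 1 else 0)) * rho (uR i)"
        by (simp only: rb_LR[OF i j])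
    qed
    also have "\<dots> = Zp * rho (uR j) - Yp * rho (uR (Suc j))" by (rule hbT_sum[OF j])
    finally show "rho (Zp * uR j - Yp * uR (Suc j)) = 0" by (simp add: rho_diff rho_Yp_mult rho_Zp_mult)
  qed
  have "\<forall>i\<le>n. homog D (uR i)" using fh by (simp add: uR_def)
  then obtain t where th: "homog (D - n) t" and tr: "rho t = t" and tz: "D < n \<longrightarrow> t = 0"
    and tu: "\<forall>i\<le>n. rho (uR i) = mon (mm n i) * t"
    using S4h[OF _ b] by blast
  define f1 where "f1 k = f k - beta3 n \<Phi> t k" for k
  have f1F: "f1 \<in> Fmod n" unfolding f1_def[abs_def] by (rule Fmod_diff[OF fF beta3_Fmod])
  have hb3: "homog D (beta3 n \<Phi> t k)" for k
  proof (cases "D < n")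
    case True
    then show ?thesis using tz by (simp add: beta3_def)
  next
    case False
    have "homog (n + (D - n)) (b3 n \<Phi> k * t)" if "k \<in> Bidx n"
      by (rule homog_mult[OF _ th]) (simp add: b3_b1 homog_b1 that)
    then show ?thesis using False by (simp add: beta3_def)
  qed
  have f1h: "\<forall>k. homog D (f1 k)" using fh hb3 by (simp add: f1_def homog_diff)
  have f1b: "beta2 n \<Phi> f1 = (\<lambda>_. 0)" unfolding f1_def[abs_def] using fb by (simp add: beta2_diff beta2_beta3)
  have f1rho: "\<forall>k\<in>Bidx n. rho (f1 k) = 0"
  proof
    fix k assume k: "k \<in> Bidx n"
    then show "rho (f1 k) = 0"
    proof (cases rule: Bidx_cases)
      case (L j)
      have "rho (beta3 n \<Phi> t k) = 0" using k L by (simp add: beta3_def mult.assoc rho_Xp_mult)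
      then show ?thesis using gL0 L by (simp add: f1_def rho_diff gL_def)
    next
      case (R i)
      have "rho (beta3 n \<Phi> t k) = mon (mm n i) * t"
        using k R tr by (simp add: beta3_def left_diff_distrib rho_diff mult.assoc rho_Xp_mult rho_mon_mult)
      then show ?thesis using tu R by (simp add: f1_def rho_diff uR_def)
    qed
  qed
  obtain f3 where f3F: "f3 \<in> Fmod n" and f3h: "\<forall>k. homog (D - 1) (f3 k)"
    and f3z: "D = 0 \<longrightarrow> (\<forall>k. f3 k = 0)" and f13: "f1 = (\<lambda>k. Xp * f3 k)"
    using Xp_divide[OF f1F f1h f1rho] by blast
  have ff: "f = (\<lambda>k. beta3 n \<Phi> t k + Xp * f3 k)"
  proof
    fix k
    have "f1 k = Xp * f3 k" using f13 by simp
    then show "f k = beta3 n \<Phi> t k + Xp * f3 k" by (simp add: f1_def algebra_simps)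
  qed
  show ?case
  proof (cases "D = 0")
    case True
    then have "f = beta3 n \<Phi> t" using ff f3z by simp
    then show ?thesis by blast
  next
    case False
    have "beta2 n \<Phi> f3 = (\<lambda>_. 0)"
    proof
      fix i
      have "Xp * beta2 n \<Phi> f3 i = 0" using f1b f13 by (metis beta2_scale)
      then have "(Xp :: 'k mpoly3) = 0 \<or> beta2 n \<Phi> f3 i = 0" by (rule iffD1[OF mult_eq_0_iff])
      then show "beta2 n \<Phi> f3 i = 0" using Xp_nz[where 'k='k] by (elim disjE) simp_all
    qed
    then obtain s where s: "f3 = beta3 n \<Phi> s"
      using less.IH[of "D - 1" f3] False f3F f3h by auto
    have "f = beta3 n \<Phi> (t + Xp * s)"
      using ff s by (auto simp: beta3_def algebra_simps)
    then show ?thesis by blast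
  qed
qed

lemma Fmod_bound:
  fixes f :: "bidx \<Rightarrow> 'k mpoly3"
  shows "\<exists>N. \<forall>k\<in>Bidx n. \<forall>m\<in>kys (f k). mdeg m \<le> N"
proof -
  define N where "N = (\<Sum>k\<in>Bidx n. Max (mdeg ` kys (f k)))"
  have "mdeg m \<le> N" if "k \<in> Bidx n" "m \<in> kys (f k)" for k m
  proof -
    have "mdeg m \<le> Max (mdeg ` kys (f k))" using that by simp
    also have "\<dots> \<le> N" unfolding N_def by (rule member_le_sum) (simp_all add: that)
    finally show ?thesis .
  qed
  then show ?thesis by blast
qed

lemma Fmod_decomp:
  fixes f :: "bidx \<Rightarrow> 'k mpoly3"
  assumes "f \<in> Fmod n" "\<forall>k\<in>Bidx n. \<forall>m\<in>kys (f k). mdeg m \<le> N"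
  shows "f k = (\<Sum>D\<le>N. hc D (f k))"
proof (cases "k \<in> Bidx n")
  case True
  then show ?thesis using assms(2) by (intro hc_decomp) auto
next
  case False
  then show ?thesis using assms(1) by (simp add: Fmod_def)
qed

lemma E1:
  fixes f :: "bidx \<Rightarrow> 'k mpoly3"
  assumes fF: "f \<in> Fmod n" and fb: "beta1 n \<Phi> f = 0"
  shows "\<exists>w\<in>Fmod n. f = beta2 n \<Phi> w"
proof -
  obtain N where N: "\<forall>k\<in>Bidx n. \<forall>m\<in>kys (f k). mdeg m \<le> N" using Fmod_bound by blast
  have "\<forall>D. \<exists>w. w \<in> Fmod n \<and> (\<lambda>k. hc D (f k)) = beta2 n \<Phi> w"
  proof
    fix D
    have F: "(\<lambda>k. hc D (f k)) \<in> Fmod n" using fF by (simp add: Fmod_def)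
    have h: "\<forall>k. homog D (hc D (f k))" by (simp add: homog_hc)
    have "beta1 n \<Phi> (\<lambda>k. hc D (f k)) = hc (D + n) (beta1 n \<Phi> f)"
      unfolding beta1_def hc_sum[OF finite_Bidx]
      by (intro sum.cong refl) (simp add: hc_homog_mult[OF homog_b1])
    then have "beta1 n \<Phi> (\<lambda>k. hc D (f k)) = 0" using fb by simp
    then show "\<exists>w. w \<in> Fmod n \<and> (\<lambda>k. hc D (f k)) = beta2 n \<Phi> w" using E1h[OF F h] by blast
  qed
  then obtain W where W: "\<forall>D. W D \<in> Fmod n \<and> (\<lambda>k. hc D (f k)) = beta2 n \<Phi> (W D)" by (rule choice[THEN exE])
  define w where "w k = (\<Sum>D\<le>N. W D k)" for k
  have wF: "w \<in> Fmod n" unfolding w_def[abs_def] by (rule Fmod_sum) (use W in auto)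
  have "f = beta2 n \<Phi> w"
  proof
    fix k
    have "beta2 n \<Phi> w k = (\<Sum>D\<le>N. beta2 n \<Phi> (W D) k)" unfolding w_def[abs_def] by (simp add: beta2_sum)
    also have "\<dots> = (\<Sum>D\<le>N. hc D (f k))"
    proof (intro sum.cong refl)
      fix D
      have "(\<lambda>k. hc D (f k)) = beta2 n \<Phi> (W D)" using W by blast
      then show "beta2 n \<Phi> (W D) k = hc D (f k)" by (metis)
    qed
    also have "\<dots> = f k" using Fmod_decomp[OF fF N] by simp
    finally show "f k = beta2 n \<Phi> w k" by simp
  qed
  then show ?thesis using wF by blast
qed

lemma E2:
  fixes f :: "bidx \<Rightarrow> 'k mpoly3"
  assumes fF: "f \<in> Fmod n" and fb: "beta2 n \<Phi> f = (\<lambda>_. 0)"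
  shows "\<exists>r. f = beta3 n \<Phi> r"
proof -
  obtain N where N: "\<forall>k\<in>Bidx n. \<forall>m\<in>kys (f k). mdeg m \<le> N" using Fmod_bound by blast
  have "\<forall>D. \<exists>r. (\<lambda>k. hc D (f k)) = beta3 n \<Phi> r"
  proof
    fix D
    have F: "(\<lambda>k. hc D (f k)) \<in> Fmod n" using fF by (simp add: Fmod_def)
    have h: "\<forall>k. homog D (hc D (f k))" by (simp add: homog_hc)
    have "beta2 n \<Phi> (\<lambda>k. hc D (f k)) = (\<lambda>i. hc (D + 1) (beta2 n \<Phi> f i))"
    proof
      fix i
      show "beta2 n \<Phi> (\<lambda>k. hc D (f k)) i = hc (D + 1) (beta2 n \<Phi> f i)"
      proof (cases "i \<in> Bidx n")
        case True
        have "hc (D + 1) (\<Sum>j\<in>Bidx n. b2 n \<Phi> i j * f j) = (\<Sum>j\<in>Bidx n. hc (D + 1) (b2 n \<Phi> i j * f j))"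
          by (rule hc_sum[OF finite_Bidx])
        also have "\<dots> = (\<Sum>j\<in>Bidx n. b2 n \<Phi> i j * hc D (f j))"
          by (intro sum.cong refl) (simp add: hc_homog_mult[OF homog_b2])
        finally show ?thesis using True by (simp add: beta2_def)
      qed (simp add: beta2_def)
    qed
    then have "beta2 n \<Phi> (\<lambda>k. hc D (f k)) = (\<lambda>_. 0)" using fb by simp
    then show "\<exists>r. (\<lambda>k. hc D (f k)) = beta3 n \<Phi> r" using E2h[OF F h] by blast
  qed
  then obtain R where R: "\<forall>D. (\<lambda>k. hc D (f k)) = beta3 n \<Phi> (R D)" by (rule choice[THEN exE])
  have "f = beta3 n \<Phi> (\<Sum>D\<le>N. R D)"
  proof
    fix k
    have "beta3 n \<Phi> (\<Sum>D\<le>N. R D) k = (\<Sum>D\<le>N. beta3 n \<Phi> (R D) k)" by (simp add: beta3_sum)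
    also have "\<dots> = (\<Sum>D\<le>N. hc D (f k))"
    proof (intro sum.cong refl)
      fix D
      have "(\<lambda>k. hc D (f k)) = beta3 n \<Phi> (R D)" using R by blast
      then show "beta3 n \<Phi> (R D) k = hc D (f k)" by (metis)
    qed
    also have "\<dots> = f k" using Fmod_decomp[OF fF N] by simp
    finally show "f k = beta3 n \<Phi> (\<Sum>D\<le>N. R D) k" by simp
  qed
  then show ?thesis by blast
qed

lemma beta3_inj: "beta3 n \<Phi> r = (\<lambda>_. 0) \<Longrightarrow> r = 0"
proof -
  assume a: "beta3 n \<Phi> r = (\<lambda>_. 0)"
  have m: "mm n 0 \<in> M0 n" by (simp add: mm_in_M0)
  have "b3 n \<Phi> (Inr (mm n 0)) * r = 0" using fun_cong[OF a, of "Inr (mm n 0)"] inR[of 0]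
    by (simp add: beta3_def)
  then have "b1 n \<Phi> (Inr (mm n 0)) = 0 \<or> r = 0" by (simp only: b3_b1 mult_eq_0_iff)
  then show "r = 0" using b1R_nz[OF m] by blast
qed

lemma card_Bidx: "card (Bidx n) = 2 * n + 1"
proof -
  have "card (Bidx n) = card (Inl ` M0 (n - 1) :: bidx set) + card (Inr ` M0 n :: bidx set)"
    unfolding Bidx_def by (rule card_Un_disjoint) auto
  also have "\<dots> = Suc (n - 1) + Suc n" by (simp add: card_image card_M0)
  also have "\<dots> = 2 * n + 1" using npos by simp
  finally show ?thesis .
qed

end

theorem theorem3p6:
  fixes n :: nat and \<Phi> :: "'k::field dp"
  assumes "n > 0"
    and "\<Phi> \<in> Dsp (2 * n - 1)"
    and "bij_betw (pmap \<Phi>) (Sym (n - 1)) (Dsp (n - 1))"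
  shows
    \<comment> \<open>exactness of 0 \<rightarrow> B_3 \<rightarrow> B_2 \<rightarrow> B_1 \<rightarrow> B_0 \<rightarrow> R/I \<rightarrow> 0\<close>
    "(\<forall>r. beta3 n \<Phi> r = (\<lambda>_. 0) \<longrightarrow> r = 0)
     \<and> {f \<in> Fmod n. beta2 n \<Phi> f = (\<lambda>_. 0)} = range (beta3 n \<Phi>)
     \<and> {f \<in> Fmod n. beta1 n \<Phi> f = 0} = beta2 n \<Phi> ` Fmod n
     \<and> beta1 n \<Phi> ` Fmod n = Iid \<Phi>
     \<comment> \<open>minimality: all matrix entries lie in the maximal ideal (x,y,z)\<close>
     \<and> (\<forall>j\<in>Bidx n. Poly_Mapping.lookup (b1 n \<Phi> j) 0 = 0)
     \<and> (\<forall>i\<in>Bidx n. \<forall>j\<in>Bidx n. Poly_Mapping.lookup (b2 n \<Phi> i j) 0 = 0)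
     \<and> (\<forall>i\<in>Bidx n. Poly_Mapping.lookup (b3 n \<Phi> i) 0 = 0)
     \<comment> \<open>graded form 0 \<rightarrow> R(-2n-1) \<rightarrow> R(-n-1)^{2n+1} \<rightarrow> R(-n)^{2n+1} \<rightarrow> R\<close>
     \<and> card (Bidx n) = 2 * n + 1
     \<and> (\<forall>j\<in>Bidx n. homog n (b1 n \<Phi> j))
     \<and> (\<forall>i\<in>Bidx n. \<forall>j\<in>Bidx n. homog 1 (b2 n \<Phi> i j))
     \<and> (\<forall>i\<in>Bidx n. homog n (b3 n \<Phi> i))"
proof -
  interpret resol n \<Phi> using assms by unfold_locales
  have c1: "\<forall>r. beta3 n \<Phi> r = (\<lambda>_. 0) \<longrightarrow> r = 0" using beta3_inj by blast
  have c2: "{f \<in> Fmod n. beta2 n \<Phi> f = (\<lambda>_. 0)} = range (beta3 n \<Phi>)"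
  proof
    show "{f \<in> Fmod n. beta2 n \<Phi> f = (\<lambda>_. 0)} \<subseteq> range (beta3 n \<Phi>)" using E2 by blast
    show "range (beta3 n \<Phi>) \<subseteq> {f \<in> Fmod n. beta2 n \<Phi> f = (\<lambda>_. 0)}"
      using beta3_Fmod beta2_beta3 by blast
  qed
  have c3: "{f \<in> Fmod n. beta1 n \<Phi> f = 0} = beta2 n \<Phi> ` Fmod n"
  proof
    show "{f \<in> Fmod n. beta1 n \<Phi> f = 0} \<subseteq> beta2 n \<Phi> ` Fmod n" using E1 by blast
    show "beta2 n \<Phi> ` Fmod n \<subseteq> {f \<in> Fmod n. beta1 n \<Phi> f = 0}"
      using beta2_Fmod beta1_beta2 by blast
  qed
  have hb1: "\<forall>j\<in>Bidx n. homog n (b1 n \<Phi> j)" using homog_b1 by blast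
  have hb2: "\<forall>i\<in>Bidx n. \<forall>j\<in>Bidx n. homog 1 (b2 n \<Phi> i j)" using homog_b2 by blast
  have hb3: "\<forall>i\<in>Bidx n. homog n (b3 n \<Phi> i)" using homog_b1 by (simp add: b3_b1)
  have l1: "\<forall>j\<in>Bidx n. Poly_Mapping.lookup (b1 n \<Phi> j) 0 = 0" using hb1 lkp0 npos by blast
  have l2: "\<forall>i\<in>Bidx n. \<forall>j\<in>Bidx n. Poly_Mapping.lookup (b2 n \<Phi> i j) 0 = 0"
    using hb2 lkp0[of 1] by fastforce
  have l3: "\<forall>i\<in>Bidx n. Poly_Mapping.lookup (b3 n \<Phi> i) 0 = 0" using hb3 lkp0 npos by blast
  show ?thesis using c1 c2 c3 JJ_eq_Iid l1 l2 l3 card_Bidx hb1 hb2 hb3 by blast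
qed


end
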